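(* Consider the following time-allocation model. Task durations $X_1,X_2,\dots$ are i.i.d. copies of a random variable $X$ taking values in $[0,C]$ (with $C>0$). A measurable reward function $r:[0,C]\to[E,D]$ is given, with $E\le 0\le D$. Task proposals arrive according to a Poisson process of intensity $\lambda>0$ while the agent is idle (equivalently, the idle times between the end of the previous task, or the previous rejection, and the next proposal are i.i.d. exponential with parameter $\lambda$, independent of the durations). When a task of duration $x$ is proposed, the agent either accepts it, in which case she is busy during a time $x$ and earns expected reward $r(x)$, or rejects it and stays idle. For $t\in[0,T]$, let $v(t)$ be the value function, i.e. the maximal expected total reward that a policy can accumulate from tasks proposed in $[t,T]$ when the agent is idle (on hold) at time $t$, and set $v(t)=0$ for $t\ge T$. Then $v$ satisfies the dynamic programming equation $$v'(t)=-\lambda\,\mathbb{E}\big[(r(X)+v(t+X)-v(t))_+\big]\ \text{ for all } t<T,\qquad v(t)=0\ \text{ for all } t\ge T,$$ where $(z)_+=\max\{z,0\}$. Moreover the function $\Phi:\mathbb{R}_+\to\mathbb{R}$, $\Phi(c)=\lambda\,\mathbb{E}[(r(X)-cX)_+]-c$ has a unique root $c^*$, and, writing $w(t)=c^*(T-t)$, for all $t\in[0,T]$, $$w(t-C)\ \ge\ v(t)\ \ge\ w(t).$$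
   Context: $X$ denotes a generic task duration with the same law as the $X_i$. The expectation $\mathbb{E}[(r(X)+v(t+X)-v(t))_+]$ is over $X$. *)

theory Defs
  imports "HOL-Probability.Probability"
begin

text \<open>Law of one (idle time, task duration) pair: an Exp(l) idle time independent
  of a duration distributed as X.\<close>
definition task_measure :: "real \<Rightarrow> 'a measure \<Rightarrow> ('a \<Rightarrow> real) \<Rightarrow> (real \<times> real) measure" where
  "task_measure l M X = density lborel (exponential_density l) \<Otimes>\<^sub>M distr M borel X"

definition sample_space :: "real \<Rightarrow> 'a measure \<Rightarrow> ('a \<Rightarrow> real) \<Rightarrow> (nat \<Rightarrow> real \<times> real) measure" where
  "sample_space l M X = PiM UNIV (\<lambda>_::nat. task_measure l M X)"

text \<open>A (history dependent, deterministic) policy: d k w says whether the k-th proposal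
  is accepted; it may only depend on the history up to and including the k-th proposal.\<close>
type_synonym policy = "nat \<Rightarrow> (nat \<Rightarrow> real \<times> real) \<Rightarrow> bool"

definition admissible_policy :: "(nat \<Rightarrow> real \<times> real) measure \<Rightarrow> policy \<Rightarrow> bool" where
  "admissible_policy \<Omega> d \<longleftrightarrow>
     (\<forall>k. d k \<in> measurable \<Omega> (count_space UNIV)) \<and>
     (\<forall>k w w'. (\<forall>i\<le>k. w i = w' i) \<longrightarrow> d k w = d k w')"

text \<open>Time at which the agent becomes idle just before the k-th proposal, starting idle at t.\<close>
fun idle_time :: "real \<Rightarrow> policy \<Rightarrow> (nat \<Rightarrow> real \<times> real) \<Rightarrow> nat \<Rightarrow> real" where
  "idle_time t d w 0 = t"
| "idle_time t d w (Suc k) =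
     idle_time t d w k + fst (w k) + (if d k w then snd (w k) else 0)"

definition proposal_time :: "real \<Rightarrow> policy \<Rightarrow> (nat \<Rightarrow> real \<times> real) \<Rightarrow> nat \<Rightarrow> real" where
  "proposal_time t d w k = idle_time t d w k + fst (w k)"

definition total_reward :: "real \<Rightarrow> (real \<Rightarrow> real) \<Rightarrow> real \<Rightarrow> policy \<Rightarrow> (nat \<Rightarrow> real \<times> real) \<Rightarrow> real" where
  "total_reward T r t d w =
     (\<Sum>k. if proposal_time t d w k \<le> T \<and> d k w then r (snd (w k)) else 0)"

definition value_fn :: "real \<Rightarrow> 'a measure \<Rightarrow> ('a \<Rightarrow> real) \<Rightarrow> (real \<Rightarrow> real) \<Rightarrow> real \<Rightarrow> real \<Rightarrow> real" where
  "value_fn l M X r T t =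
     (if T \<le> t then 0
      else (SUP d \<in> {d. admissible_policy (sample_space l M X) d}.
              integral\<^sup>L (sample_space l M X) (total_reward T r t d)))"

end

theory Submission
  imports Defs
begin

locale tm =
  fixes M :: "'a measure" and X :: "'a \<Rightarrow> real" and r :: "real \<Rightarrow> real"
    and l C D E T :: real
  assumes M: "prob_space M" and Xm[measurable]: "X \<in> borel_measurable M"
    and Xrange: "\<forall>w\<in>space M. X w \<in> {0..C}" and C: "C > 0"
    and rm[measurable]: "r \<in> borel_measurable borel"
    and rrange: "\<forall>x\<in>{0..C}. r x \<in> {E..D}"
    and ED: "E \<le> 0" "0 \<le> D" and l: "l > 0"
begin

abbreviation "rho \<equiv> density lborel (exponential_density l)"
abbreviation "mu \<equiv> distr M borel X"
definition "nu = task_measure l M X"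
definition "Om = sample_space l M X"

lemma nu_eq: "nu = rho \<Otimes>\<^sub>M mu" by (simp add: nu_def task_measure_def)
lemma prob_rho: "prob_space rho" using l by (rule prob_space_exponential_density)
lemma prob_mu: "prob_space mu" using M Xm by (simp add: prob_space.prob_space_distr)

sublocale pr: pair_prob_space rho mu
  using prob_rho prob_mu by (simp add: pair_prob_space_def pair_sigma_finite_def prob_space_imp_sigma_finite)

lemma prob_nu: "prob_space nu" unfolding nu_eq by (rule pr.prob_space_axioms)

lemma sets_rm[measurable_cong]: "sets (rho \<Otimes>\<^sub>M mu) = sets (borel \<Otimes>\<^sub>M borel)"
  by (intro sets_pair_measure_cong) auto

lemma sets_nu[measurable_cong]: "sets nu = sets (borel \<Otimes>\<^sub>M borel)"
  unfolding nu_eq by (rule sets_rm)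

lemma space_nu[simp]: "space nu = UNIV"
  unfolding nu_eq by (simp add: space_pair_measure)

sublocale sq: sequence_space nu
  unfolding sequence_space_def product_prob_space_def product_sigma_finite_def product_prob_space_axioms_def
  using prob_nu by (auto simp: prob_space_imp_sigma_finite)

lemma Om_eq: "Om = PiM UNIV (\<lambda>_. nu)" by (simp add: Om_def sample_space_def nu_def)

lemma prob_Om: "prob_space Om" unfolding Om_eq by (rule sq.prob_space_axioms)

sublocale po: pair_prob_space nu Om
  using prob_nu prob_Om by (simp add: pair_prob_space_def pair_sigma_finite_def prob_space_imp_sigma_finite)

lemma case_meas[measurable]: "(\<lambda>(s, \<omega>). case_nat s \<omega>) \<in> measurable (nu \<Otimes>\<^sub>M Om) Om"
  unfolding Om_eq by measurable

lemma case_meas2[measurable]: "(\<lambda>\<omega>. case_nat s \<omega>) \<in> measurable Om Om"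
  unfolding Om_eq by measurable

lemma iter: "distr (nu \<Otimes>\<^sub>M Om) Om (\<lambda>(s, \<omega>). case_nat s \<omega>) = Om"
  unfolding Om_eq by (rule sq.PiM_iter)

definition good :: "real \<times> real \<Rightarrow> bool" where
  "good w \<longleftrightarrow> fst w > 0 \<and> snd w \<in> {0..C}"

lemma good_meas[measurable]: "Measurable.pred (borel \<Otimes>\<^sub>M borel) good"
  unfolding good_def by measurable

lemma AE_rho_pos: "AE x in rho. x > 0"
proof -
  have "AE x in lborel. 0 < exponential_density l x \<longrightarrow> x > 0"
    using AE_lborel_singleton[of 0] by eventually_elim (auto simp: exponential_density_def)
  then show ?thesis by (subst AE_density) auto
qed

lemma AE_mu: "AE x in mu. x \<in> {0..C}"
  by (subst AE_distr_iff) (use Xrange in auto)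

lemma AE_good: "AE w in nu. good w"
  unfolding nu_eq
proof (rule pr.AE_pair_measure)
  show "{x \<in> space (rho \<Otimes>\<^sub>M mu). good x} \<in> sets (rho \<Otimes>\<^sub>M mu)"
    by measurable
  show "AE x in rho. AE y in mu. good (x, y)"
    using AE_rho_pos by eventually_elim (use AE_mu in \<open>auto simp: good_def elim!: eventually_mono\<close>)
qed

lemma AE_Om_good: "AE \<omega> in Om. \<forall>i. good (\<omega> i)"
  unfolding AE_all_countable Om_eq
  by (intro allI AE_PiM_component) (use prob_nu AE_good in auto)

end

context tm begin

definition "q = (\<integral>w. exp (- max (fst w) 0) \<partial>nu)"

lemma q_int: "integrable nu (\<lambda>w. exp (- max (fst w) 0))"
  using prob_nu by (intro finite_measure.integrable_const_bound[where B=1]) (auto simp: prob_space_def)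

lemma q_nonneg: "0 \<le> q" unfolding q_def by (rule Bochner_Integration.integral_nonneg) auto

lemma q_less1: "q < 1"
proof -
  have i2: "integrable nu (\<lambda>w. 1 - exp (- max (fst w) 0))"
    using q_int by auto
  have "(\<integral>w. 1 - exp (- max (fst w) 0) \<partial>nu) = 1 - q"
    unfolding q_def using q_int sq.M.prob_space by (subst Bochner_Integration.integral_diff) auto
  moreover have "(\<integral>w. 1 - exp (- max (fst w) 0) \<partial>nu) \<noteq> 0"
  proof
    assume "(\<integral>w. 1 - exp (- max (fst w) 0) \<partial>nu) = 0"
    then have "AE w in nu. 1 - exp (- max (fst w) 0) = 0"
      using i2 by (subst (asm) integral_nonneg_eq_0_iff_AE) auto
    with AE_good have "AE w in nu. False"
      by eventually_elim (auto simp: good_def)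
    then show False by simp
  qed
  moreover have "(\<integral>w. 1 - exp (- max (fst w) 0) \<partial>nu) \<ge> 0"
    by (rule Bochner_Integration.integral_nonneg) auto
  ultimately show ?thesis by linarith
qed

definition ps :: "nat \<Rightarrow> (nat \<Rightarrow> real \<times> real) \<Rightarrow> real" where
  "ps k \<omega> = (\<Sum>i<k. max (fst (\<omega> i)) 0)"

lemma ps_meas[measurable]: "ps k \<in> borel_measurable Om"
  unfolding ps_def Om_eq by measurable

lemma ps_Suc_case: "ps (Suc k) (case_nat s \<omega>) = max (fst s) 0 + ps k \<omega>"
  unfolding ps_def by (subst sum.lessThan_Suc_shift) simp

lemma ps_nonneg: "0 \<le> ps k \<omega>" unfolding ps_def by (intro sum_nonneg) auto

lemma nn_exp_ps: "(\<integral>\<^sup>+\<omega>. ennreal (exp (- ps k \<omega>)) \<partial>Om) = ennreal q ^ k"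
proof (induction k)
  case 0
  show ?case by (simp add: ps_def po.M2.emeasure_space_1)
next
  case (Suc k)
  have "(\<integral>\<^sup>+\<omega>. ennreal (exp (- ps (Suc k) \<omega>)) \<partial>Om)
      = (\<integral>\<^sup>+\<omega>. ennreal (exp (- ps (Suc k) \<omega>)) \<partial>(distr (nu \<Otimes>\<^sub>M Om) Om (\<lambda>(s, \<omega>). case_nat s \<omega>)))"
    by (simp add: iter)
  also have "\<dots> = (\<integral>\<^sup>+z. ennreal (exp (- ps (Suc k) (case_nat (fst z) (snd z)))) \<partial>(nu \<Otimes>\<^sub>M Om))"
    by (subst nn_integral_distr) (auto simp: split_beta')
  also have "\<dots> = (\<integral>\<^sup>+z. ennreal (exp (- max (fst (fst z)) 0)) * ennreal (exp (- ps k (snd z))) \<partial>(nu \<Otimes>\<^sub>M Om))"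
    by (intro nn_integral_cong) (auto simp: ps_Suc_case exp_add[symmetric] ennreal_mult[symmetric] algebra_simps)
  also have "\<dots> = (\<integral>\<^sup>+s. \<integral>\<^sup>+\<omega>. ennreal (exp (- max (fst s) 0)) * ennreal (exp (- ps k \<omega>)) \<partial>Om \<partial>nu)"
    using po.M2.nn_integral_fst[of "\<lambda>z. ennreal (exp (- max (fst (fst z)) 0)) * ennreal (exp (- ps k (snd z)))" nu]
    by simp
  also have "\<dots> = (\<integral>\<^sup>+s. ennreal (exp (- max (fst s) 0)) * ennreal q ^ k \<partial>nu)"
    by (subst nn_integral_cmult) (auto simp: Suc)
  also have "\<dots> = (\<integral>\<^sup>+s. ennreal (exp (- max (fst s) 0)) \<partial>nu) * ennreal q ^ k"
    by (subst nn_integral_multc) auto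
  also have "(\<integral>\<^sup>+s. ennreal (exp (- max (fst s) 0)) \<partial>nu) = ennreal q"
    unfolding q_def using q_int by (subst nn_integral_eq_integral) auto
  finally show ?case by simp
qed

definition cnt :: "real \<Rightarrow> (nat \<Rightarrow> real \<times> real) \<Rightarrow> ennreal" where
  "cnt S \<omega> = (\<Sum>k. if ps (Suc k) \<omega> \<le> S then 1 else 0)"

lemma cnt_meas[measurable]: "cnt S \<in> borel_measurable Om"
  unfolding cnt_def by measurable

lemma cnt_mono: "S \<le> S' \<Longrightarrow> cnt S \<omega> \<le> cnt S' \<omega>"
  unfolding cnt_def by (intro suminf_le) auto

lemma nn_cnt: "(\<integral>\<^sup>+\<omega>. cnt S \<omega> \<partial>Om) \<le> ennreal (exp S * (\<Sum>k. q ^ Suc k))"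
proof -
  have sq: "summable (\<lambda>k. q ^ Suc k)"
    using q_nonneg q_less1 by (simp only: power_Suc) (intro summable_mult summable_geometric, simp)
  have "(\<integral>\<^sup>+\<omega>. cnt S \<omega> \<partial>Om) = (\<Sum>k. \<integral>\<^sup>+\<omega>. (if ps (Suc k) \<omega> \<le> S then 1 else 0) \<partial>Om)"
    unfolding cnt_def by (rule nn_integral_suminf) measurable
  also have "\<dots> \<le> (\<Sum>k. ennreal (exp S) * ennreal (q ^ Suc k))"
  proof (intro suminf_le allI)
    fix k
    have "(\<integral>\<^sup>+\<omega>. (if ps (Suc k) \<omega> \<le> S then 1 else 0) \<partial>Om)
        \<le> (\<integral>\<^sup>+\<omega>. ennreal (exp S) * ennreal (exp (- ps (Suc k) \<omega>)) \<partial>Om)"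
    proof (intro nn_integral_mono)
      fix \<omega>
      have "ps (Suc k) \<omega> \<le> S \<Longrightarrow> 1 \<le> exp S * exp (- ps (Suc k) \<omega>)"
        by (simp add: exp_add[symmetric])
      then show "(if ps (Suc k) \<omega> \<le> S then 1 else 0) \<le> ennreal (exp S) * ennreal (exp (- ps (Suc k) \<omega>))"
        by (auto simp: ennreal_mult[symmetric] ennreal_1[symmetric] simp del: ennreal_1 intro: ennreal_leI)
    qed
    also have "\<dots> = ennreal (exp S) * ennreal q ^ Suc k"
      by (subst nn_integral_cmult) (auto simp: nn_exp_ps simp del: power_Suc)
    also have "ennreal q ^ Suc k = ennreal (q ^ Suc k)"
      by (simp add: ennreal_power q_nonneg del: power_Suc)
    finally show "(\<integral>\<^sup>+\<omega>. (if ps (Suc k) \<omega> \<le> S then 1 else 0) \<partial>Om) \<le> ennreal (exp S) * ennreal (q ^ Suc k)" .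
  qed auto
  also have "\<dots> = ennreal (exp S) * ennreal (\<Sum>k. q ^ Suc k)"
    using sq q_nonneg by (subst ennreal_suminf_cmult) (subst suminf_ennreal2, auto)
  moreover have sn: "0 \<le> (\<Sum>k. q ^ Suc k)" using sq q_nonneg by (intro suminf_nonneg) auto
  ultimately show ?thesis by (simp add: ennreal_mult del: power_Suc)
qed

lemma nn_cnt_fin: "(\<integral>\<^sup>+\<omega>. cnt S \<omega> \<partial>Om) < \<infinity>"
  using nn_cnt[of S] by (simp add: le_less_trans top.not_eq_extremum)

definition G :: "(nat \<Rightarrow> real \<times> real) \<Rightarrow> bool" where
  "G \<omega> \<longleftrightarrow> (\<forall>i. good (\<omega> i)) \<and> (\<forall>S. cnt S \<omega> \<noteq> \<top>)"

lemma AE_G: "AE \<omega> in Om. G \<omega>"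
proof -
  have "AE \<omega> in Om. \<forall>n::nat. cnt (real n) \<omega> \<noteq> \<top>"
    unfolding AE_all_countable
  proof (intro allI)
    fix n :: nat
    show "AE \<omega> in Om. cnt (real n) \<omega> \<noteq> \<top>"
      using nn_integral_PInf_AE[of "cnt (real n)" Om] nn_cnt_fin[of "real n"] by (simp add: less_top)
  qed
  with AE_Om_good show ?thesis
  proof eventually_elim
    case (elim \<omega>)
    have "cnt S \<omega> \<noteq> \<top>" for S
    proof -
      have "cnt S \<omega> \<le> cnt (real (nat \<lceil>S\<rceil>)) \<omega>"
        by (intro cnt_mono) linarith
      then show ?thesis using elim(2) by (auto simp: top_unique)
    qed
    then show ?case using elim by (simp add: G_def)
  qed
qed

end

context tm begin

definition adm :: "policy \<Rightarrow> bool" where "adm d \<longleftrightarrow> admissible_policy Om d"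

lemma adm_meas: "adm d \<Longrightarrow> Measurable.pred Om (d k)"
  by (simp add: adm_def admissible_policy_def)

lemma adm_pref: "adm d \<Longrightarrow> (\<And>i. i \<le> k \<Longrightarrow> w i = w' i) \<Longrightarrow> d k w = d k w'"
  unfolding adm_def admissible_policy_def by blast

lemma comp_meas[measurable]: "(\<lambda>\<omega>. \<omega> i) \<in> measurable Om nu"
  unfolding Om_eq by measurable

lemma fst_nu[measurable]: "fst \<in> borel_measurable nu"
  by (subst measurable_cong_sets[OF sets_nu refl]) measurable

lemma snd_nu[measurable]: "snd \<in> borel_measurable nu"
  by (subst measurable_cong_sets[OF sets_nu refl]) measurable

lemma comp_fst_meas[measurable]: "(\<lambda>\<omega>. fst (\<omega> i)) \<in> borel_measurable Om"
  by (rule measurable_compose[OF comp_meas fst_nu])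

lemma comp_snd_meas[measurable]: "(\<lambda>\<omega>. snd (\<omega> i)) \<in> borel_measurable Om"
  by (rule measurable_compose[OF comp_meas snd_nu])

lemma idle_meas:
  assumes "adm d" shows "(\<lambda>\<omega>. idle_time t d \<omega> k) \<in> borel_measurable Om"
proof (induction k)
  case 0 then show ?case by simp
next
  case (Suc k)
  note [measurable] = adm_meas[OF assms, of k] Suc
  show ?case by simp
qed

lemma tr_meas:
  assumes "adm d" shows "total_reward T r t d \<in> borel_measurable Om"
proof -
  note [measurable] = adm_meas[OF assms] idle_meas[OF assms]
  show ?thesis unfolding total_reward_def[abs_def] proposal_time_def by measurable
qed

definition K :: real where "K = max D (- E)"

lemma r_bound: "x \<in> {0..C} \<Longrightarrow> \<bar>r x\<bar> \<le> K"
  using rrange unfolding K_def by (fastforce simp: abs_le_iff le_max_iff_disj)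

lemma K_nonneg: "0 \<le> K" using ED unfolding K_def by auto

definition tm_term :: "real \<Rightarrow> policy \<Rightarrow> (nat \<Rightarrow> real \<times> real) \<Rightarrow> nat \<Rightarrow> real" where
  "tm_term t d \<omega> k = (if proposal_time t d \<omega> k \<le> T \<and> d k \<omega> then r (snd (\<omega> k)) else 0)"

lemma tr_eq: "total_reward T r t d \<omega> = suminf (tm_term t d \<omega>)"
  unfolding total_reward_def tm_term_def ..

lemma idle_ge:
  assumes "\<forall>i. good (\<omega> i)" shows "idle_time t d \<omega> k \<ge> t + ps k \<omega>"
proof (induction k)
  case 0 then show ?case by (simp add: ps_def)
next
  case (Suc k)
  have "fst (\<omega> k) > 0" "snd (\<omega> k) \<ge> 0" using assms by (auto simp: good_def)
  with Suc show ?case by (auto simp: ps_def)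
qed

lemma prop_ge:
  assumes "\<forall>i. good (\<omega> i)" shows "proposal_time t d \<omega> k \<ge> t + ps (Suc k) \<omega>"
proof -
  have "fst (\<omega> k) > 0" using assms by (auto simp: good_def)
  with idle_ge[OF assms, where t=t and d=d and k=k] show ?thesis by (auto simp: ps_def proposal_time_def)
qed

lemma prop_gt:
  assumes "\<forall>i. good (\<omega> i)" shows "proposal_time t d \<omega> k > t"
proof -
  have "fst (\<omega> k) > 0" using assms by (auto simp: good_def)
  moreover have "ps k \<omega> \<ge> 0" by (rule ps_nonneg)
  ultimately show ?thesis using idle_ge[OF assms, where t=t and d=d and k=k] by (auto simp: proposal_time_def)
qed

definition ind :: "real \<Rightarrow> (nat \<Rightarrow> real \<times> real) \<Rightarrow> nat \<Rightarrow> real" where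
  "ind S \<omega> k = (if ps (Suc k) \<omega> \<le> S then 1 else 0)"

lemma term_bound:
  assumes "\<forall>i. good (\<omega> i)" shows "\<bar>tm_term t d \<omega> k\<bar> \<le> K * ind (T - t) \<omega> k"
proof -
  have "snd (\<omega> k) \<in> {0..C}" using assms by (auto simp: good_def)
  then show ?thesis using prop_ge[OF assms, where t=t and d=d and k=k] r_bound K_nonneg
    by (auto simp: tm_term_def ind_def)
qed

lemma cnt_ind: "cnt S \<omega> = (\<Sum>k. ennreal (ind S \<omega> k))"
  unfolding cnt_def ind_def by (intro suminf_cong) auto

lemma G_summ:
  assumes "G \<omega>"
  shows "summable (tm_term t d \<omega>)"
    and "\<bar>total_reward T r t d \<omega>\<bar> \<le> K * enn2real (cnt (T - t) \<omega>)"
proof -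
  have g: "\<forall>i. good (\<omega> i)" and c: "cnt (T - t) \<omega> \<noteq> \<top>" using assms by (auto simp: G_def)
  have i0: "\<And>k. 0 \<le> ind (T - t) \<omega> k" by (simp add: ind_def)
  have si: "summable (ind (T - t) \<omega>)"
    using c by (intro summable_suminf_not_top) (auto simp: cnt_ind i0)
  have e: "enn2real (cnt (T - t) \<omega>) = (\<Sum>k. ind (T - t) \<omega> k)"
  proof -
    have "0 \<le> suminf (ind (T - t) \<omega>)" by (rule suminf_nonneg[OF si i0])
    then show ?thesis unfolding cnt_ind using si i0 by (subst suminf_ennreal2) auto
  qed
  have sK: "summable (\<lambda>k. K * ind (T - t) \<omega> k)" using si by (rule summable_mult)
  show st: "summable (tm_term t d \<omega>)"
    by (rule summable_comparison_test'[OF sK]) (use term_bound[OF g] in auto)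
  have sn: "summable (\<lambda>k. norm (tm_term t d \<omega> k))"
    by (rule summable_comparison_test'[OF sK]) (use term_bound[OF g] in auto)
  have "\<bar>total_reward T r t d \<omega>\<bar> \<le> (\<Sum>k. norm (tm_term t d \<omega> k))"
    unfolding tr_eq using summable_norm[OF sn] by simp
  also have "\<dots> \<le> (\<Sum>k. K * ind (T - t) \<omega> k)"
    by (intro suminf_le sn sK) (use term_bound[OF g] in auto)
  also have "\<dots> = K * enn2real (cnt (T - t) \<omega>)"
    using si by (simp add: e suminf_mult)
  finally show "\<bar>total_reward T r t d \<omega>\<bar> \<le> K * enn2real (cnt (T - t) \<omega>)" .
qed

definition Qs :: real where "Qs = (\<Sum>k. q ^ Suc k)"

lemma cnt_int: "integrable Om (\<lambda>\<omega>. enn2real (cnt S \<omega>))"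
  and cnt_int_bound: "(\<integral>\<omega>. enn2real (cnt S \<omega>) \<partial>Om) \<le> exp S * Qs"
proof -
  have le: "(\<integral>\<^sup>+\<omega>. ennreal (enn2real (cnt S \<omega>)) \<partial>Om) \<le> (\<integral>\<^sup>+\<omega>. cnt S \<omega> \<partial>Om)"
    by (intro nn_integral_mono) (simp add: ennreal_enn2real_if)
  show i: "integrable Om (\<lambda>\<omega>. enn2real (cnt S \<omega>))"
  proof (rule integrableI_bounded)
    show "(\<integral>\<^sup>+\<omega>. ennreal (norm (enn2real (cnt S \<omega>))) \<partial>Om) < \<infinity>"
      using le nn_cnt_fin[of S] by (simp add: le_less_trans)
  qed simp
  have "ennreal (\<integral>\<omega>. enn2real (cnt S \<omega>) \<partial>Om) = (\<integral>\<^sup>+\<omega>. ennreal (enn2real (cnt S \<omega>)) \<partial>Om)"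
    using i by (subst nn_integral_eq_integral) auto
  also have "\<dots> \<le> ennreal (exp S * Qs)" using le nn_cnt[of S] unfolding Qs_def by simp
  finally show "(\<integral>\<omega>. enn2real (cnt S \<omega>) \<partial>Om) \<le> exp S * Qs"
    using q_nonneg by (subst (asm) ennreal_le_iff) (auto simp: Qs_def intro!: mult_nonneg_nonneg suminf_nonneg summable_mult summable_geometric q_less1)
qed

lemma tr_int:
  assumes "adm d" shows "integrable Om (total_reward T r t d)"
proof (rule Bochner_Integration.integrable_bound)
  show "integrable Om (\<lambda>\<omega>. K * enn2real (cnt (T - t) \<omega>))"
    using cnt_int by simp
  show "total_reward T r t d \<in> borel_measurable Om" by (rule tr_meas[OF assms])
  show "AE \<omega> in Om. norm (total_reward T r t d \<omega>) \<le> norm (K * enn2real (cnt (T - t) \<omega>))"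
    using AE_G by eventually_elim (use G_summ(2) K_nonneg in auto)
qed

definition J :: "real \<Rightarrow> policy \<Rightarrow> real" where
  "J t d = (\<integral>\<omega>. total_reward T r t d \<omega> \<partial>Om)"

lemma J_bound:
  assumes "adm d" shows "\<bar>J t d\<bar> \<le> K * (exp (T - t) * Qs)"
proof -
  have "\<bar>J t d\<bar> \<le> (\<integral>\<omega>. K * enn2real (cnt (T - t) \<omega>) \<partial>Om)"
    unfolding J_def
  proof (rule order_trans[OF integral_abs_bound])
    show "(\<integral>\<omega>. \<bar>total_reward T r t d \<omega>\<bar> \<partial>Om) \<le> (\<integral>\<omega>. K * enn2real (cnt (T - t) \<omega>) \<partial>Om)"
      using AE_G cnt_int tr_int[OF assms]
      by (intro integral_mono_AE) (auto elim!: eventually_mono intro: G_summ(2))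
  qed
  also have "\<dots> = K * (\<integral>\<omega>. enn2real (cnt (T - t) \<omega>) \<partial>Om)" by simp
  also have "\<dots> \<le> K * (exp (T - t) * Qs)"
    by (intro mult_left_mono cnt_int_bound K_nonneg)
  finally show ?thesis .
qed

lemma J_zero:
  assumes "T \<le> t" shows "J t d = 0"
  unfolding J_def
proof (rule integral_eq_zero_AE)
  show "AE \<omega> in Om. total_reward T r t d \<omega> = 0"
    using AE_Om_good
  proof eventually_elim
    case (elim \<omega>)
    have "tm_term t d \<omega> k = 0" for k
      using prop_gt[OF elim, where t=t and d=d and k=k] assms by (auto simp: tm_term_def)
    then have "tm_term t d \<omega> = (\<lambda>_. 0)" by auto
    then show ?case by (simp add: tr_eq)
  qed
qed

end

context tm begin

definition shiftp :: "policy \<Rightarrow> real \<times> real \<Rightarrow> policy" where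
  "shiftp d w0 = (\<lambda>k \<omega>. d (Suc k) (case_nat w0 \<omega>))"

definition dec0 :: "policy \<Rightarrow> real \<times> real \<Rightarrow> bool" where
  "dec0 d w0 = d 0 (case_nat w0 (\<lambda>_. w0))"

definition t1 :: "real \<Rightarrow> policy \<Rightarrow> real \<times> real \<Rightarrow> real" where
  "t1 t d w0 = t + fst w0 + (if dec0 d w0 then snd w0 else 0)"

definition first :: "real \<Rightarrow> policy \<Rightarrow> real \<times> real \<Rightarrow> real" where
  "first t d w0 = (if t + fst w0 \<le> T \<and> dec0 d w0 then r (snd w0) else 0)"

lemma dec0_eq: "adm d \<Longrightarrow> d 0 (case_nat w0 \<omega>) = dec0 d w0"
  unfolding dec0_def by (rule adm_pref) auto

lemma idle_shift:
  "idle_time t d (case_nat w0 \<omega>) (Suc k) =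
   idle_time (t + fst w0 + (if d 0 (case_nat w0 \<omega>) then snd w0 else 0)) (shiftp d w0) \<omega> k"
  by (induction k) (auto simp: shiftp_def)

lemma term_shift:
  "tm_term t d (case_nat w0 \<omega>) (Suc k) =
   tm_term (t + fst w0 + (if d 0 (case_nat w0 \<omega>) then snd w0 else 0)) (shiftp d w0) \<omega> k"
  by (simp add: tm_term_def proposal_time_def idle_shift shiftp_def del: idle_time.simps)

lemma tr_shift:
  assumes "adm d" "summable (tm_term t d (case_nat w0 \<omega>))"
  shows "total_reward T r t d (case_nat w0 \<omega>) = first t d w0 + total_reward T r (t1 t d w0) (shiftp d w0) \<omega>"
proof -
  have "total_reward T r (t1 t d w0) (shiftp d w0) \<omega> = (\<Sum>k. tm_term t d (case_nat w0 \<omega>) (Suc k))"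
    unfolding tr_eq term_shift t1_def dec0_eq[OF assms(1)] ..
  also have "\<dots> = total_reward T r t d (case_nat w0 \<omega>) - tm_term t d (case_nat w0 \<omega>) 0"
    unfolding tr_eq by (rule suminf_split_head[OF assms(2)])
  also have "tm_term t d (case_nat w0 \<omega>) 0 = first t d w0"
    by (simp add: tm_term_def first_def proposal_time_def dec0_eq[OF assms(1)])
  finally show ?thesis by simp
qed

lemma adm_shift:
  assumes "adm d" shows "adm (shiftp d w0)"
  unfolding adm_def admissible_policy_def
proof (intro conjI allI impI)
  fix k
  show "shiftp d w0 k \<in> measurable Om (count_space UNIV)"
    unfolding shiftp_def by (rule measurable_compose[OF case_meas2 adm_meas[OF assms]])
  fix w w' :: "nat \<Rightarrow> real \<times> real"
  assume "\<forall>i\<le>k. w i = w' i"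
  then show "shiftp d w0 k w = shiftp d w0 k w'"
    unfolding shiftp_def by (intro adm_pref[OF assms]) (auto split: nat.split)
qed

definition IF :: "real \<Rightarrow> policy \<Rightarrow> real \<times> real \<Rightarrow> real" where
  "IF t d w0 = (\<integral>\<omega>. total_reward T r t d (case_nat w0 \<omega>) \<partial>Om)"

lemma J_rec:
  assumes "adm d"
  shows "J t d = (\<integral>w. IF t d w \<partial>nu)" and "integrable nu (IF t d)"
    and "AE w in nu. IF t d w = first t d w + J (t1 t d w) (shiftp d w)"
proof -
  have m[measurable]: "total_reward T r t d \<in> borel_measurable Om" by (rule tr_meas[OF assms])
  have "integrable (distr (nu \<Otimes>\<^sub>M Om) Om (\<lambda>(s, \<omega>). case_nat s \<omega>)) (total_reward T r t d)"
    using tr_int[OF assms, of t] by (simp only: iter)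
  then have iF: "integrable (nu \<Otimes>\<^sub>M Om) (\<lambda>z. total_reward T r t d (case_nat (fst z) (snd z)))"
    by (subst (asm) integrable_distr_eq) (auto simp: split_beta')
  have "J t d = (\<integral>\<omega>. total_reward T r t d \<omega> \<partial>(distr (nu \<Otimes>\<^sub>M Om) Om (\<lambda>(s, \<omega>). case_nat s \<omega>)))"
    unfolding J_def by (simp only: iter)
  also have "\<dots> = (\<integral>z. total_reward T r t d (case_nat (fst z) (snd z)) \<partial>(nu \<Otimes>\<^sub>M Om))"
    by (subst integral_distr) (auto simp: split_beta')
  also have "\<dots> = (\<integral>w. IF t d w \<partial>nu)"
    unfolding IF_def using po.integral_fst'[OF iF] by simp
  finally show "J t d = (\<integral>w. IF t d w \<partial>nu)" .
  show "integrable nu (IF t d)"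
    unfolding IF_def using po.integrable_fst'[OF iF] by simp
  have "AE \<omega> in distr (nu \<Otimes>\<^sub>M Om) Om (\<lambda>(s, \<omega>). case_nat s \<omega>). G \<omega>"
    using AE_G by (simp only: iter)
  then have "AE z in nu \<Otimes>\<^sub>M Om. G (case_nat (fst z) (snd z))"
    by (auto dest: AE_distrD[OF case_meas] simp: split_beta')
  then have "AE w in nu. AE \<omega> in Om. G (case_nat w \<omega>)"
    using po.AE_pair by fastforce
  then show "AE w in nu. IF t d w = first t d w + J (t1 t d w) (shiftp d w)"
  proof eventually_elim
    case (elim w)
    have ms: "total_reward T r (t1 t d w) (shiftp d w) \<in> borel_measurable Om"
      by (rule tr_meas[OF adm_shift[OF assms]])
    have "IF t d w = (\<integral>\<omega>. first t d w + total_reward T r (t1 t d w) (shiftp d w) \<omega> \<partial>Om)"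
      unfolding IF_def
    proof (rule integral_cong_AE)
      show "(\<lambda>\<omega>. total_reward T r t d (case_nat w \<omega>)) \<in> borel_measurable Om"
        by (rule measurable_compose[OF case_meas2 m])
      show "(\<lambda>\<omega>. first t d w + total_reward T r (t1 t d w) (shiftp d w) \<omega>) \<in> borel_measurable Om"
        using ms by measurable
      show "AE \<omega> in Om. total_reward T r t d (case_nat w \<omega>) = first t d w + total_reward T r (t1 t d w) (shiftp d w) \<omega>"
        using elim by eventually_elim (rule tr_shift[OF assms G_summ(1)])
    qed
    also have "\<dots> = first t d w + J (t1 t d w) (shiftp d w)"
      unfolding J_def using tr_int[OF adm_shift[OF assms]]
      by (subst Bochner_Integration.integral_add) (auto simp: po.M2.prob_space)
    finally show ?case .
  qed
qed

definition step :: "(real \<Rightarrow> real \<Rightarrow> bool) \<Rightarrow> real \<Rightarrow> real \<times> real \<Rightarrow> real" where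
  "step \<phi> s w = s + fst w + (if \<phi> (s + fst w) (snd w) then snd w else 0)"

fun Sg :: "(real \<Rightarrow> real \<Rightarrow> bool) \<Rightarrow> real \<Rightarrow> nat \<Rightarrow> (nat \<Rightarrow> real \<times> real) \<Rightarrow> real" where
  "Sg \<phi> s 0 \<omega> = s"
| "Sg \<phi> s (Suc k) \<omega> = Sg \<phi> (step \<phi> s (\<omega> 0)) k (\<lambda>i. \<omega> (Suc i))"

definition gr :: "(real \<Rightarrow> real \<Rightarrow> bool) \<Rightarrow> real \<Rightarrow> policy" where
  "gr \<phi> s = (\<lambda>k \<omega>. \<phi> (Sg \<phi> s k \<omega> + fst (\<omega> k)) (snd (\<omega> k)))"

lemma Sg_Suc': "Sg \<phi> s (Suc k) \<omega> = step \<phi> (Sg \<phi> s k \<omega>) (\<omega> k)"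
proof (induction k arbitrary: s \<omega>)
  case 0 then show ?case by simp
next
  case (Suc k)
  have "Sg \<phi> s (Suc (Suc k)) \<omega> = Sg \<phi> (step \<phi> s (\<omega> 0)) (Suc k) (\<lambda>i. \<omega> (Suc i))" by (rule Sg.simps(2))
  also have "\<dots> = step \<phi> (Sg \<phi> (step \<phi> s (\<omega> 0)) k (\<lambda>i. \<omega> (Suc i))) (\<omega> (Suc k))" by (rule Suc.IH)
  also have "\<dots> = step \<phi> (Sg \<phi> s (Suc k) \<omega>) (\<omega> (Suc k))" by (simp only: Sg.simps(2))
  finally show ?case .
qed

declare Sg.simps(2)[simp del]
declare Sg_Suc'[simp]

lemma phi_comp:
  assumes "Measurable.pred (borel \<Otimes>\<^sub>M borel) (\<lambda>z. \<phi> (fst z) (snd z))"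
    and "f \<in> borel_measurable N" "g \<in> borel_measurable N"
  shows "Measurable.pred N (\<lambda>x. \<phi> (f x) (g x))"
  using measurable_compose[OF measurable_Pair[OF assms(2,3)] assms(1)] by simp

lemma Sg_meas:
  assumes ph: "Measurable.pred (borel \<Otimes>\<^sub>M borel) (\<lambda>z. \<phi> (fst z) (snd z))"
  shows "(\<lambda>\<omega>. Sg \<phi> s k \<omega>) \<in> borel_measurable Om"
proof (induction k)
  case 0 then show ?case by simp
next
  case (Suc k)
  note [measurable] = Suc
  have [measurable]: "Measurable.pred Om (\<lambda>\<omega>. \<phi> (Sg \<phi> s k \<omega> + fst (\<omega> k)) (snd (\<omega> k)))"
    by (rule phi_comp[OF ph]) measurable
  show ?case unfolding Sg_Suc' step_def by measurable
qed

lemma Sg_pref: "(\<And>i. i < k \<Longrightarrow> \<omega> i = \<omega>' i) \<Longrightarrow> Sg \<phi> s k \<omega> = Sg \<phi> s k \<omega>'"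
proof (induction k)
  case 0 then show ?case by simp
next
  case (Suc k)
  have "Sg \<phi> s k \<omega> = Sg \<phi> s k \<omega>'" using Suc by auto
  moreover have "\<omega> k = \<omega>' k" using Suc.prems by auto
  ultimately show ?case by (simp only: Sg_Suc')
qed

lemma adm_gr:
  assumes ph: "Measurable.pred (borel \<Otimes>\<^sub>M borel) (\<lambda>z. \<phi> (fst z) (snd z))"
  shows "adm (gr \<phi> s)"
  unfolding adm_def admissible_policy_def
proof (intro conjI allI impI)
  fix k
  show "gr \<phi> s k \<in> measurable Om (count_space UNIV)"
    unfolding gr_def by (rule phi_comp[OF ph]) (use Sg_meas[OF ph] in measurable)
  fix w w' :: "nat \<Rightarrow> real \<times> real"
  assume "\<forall>i\<le>k. w i = w' i"
  moreover then have "Sg \<phi> s k w = Sg \<phi> s k w'" by (intro Sg_pref) auto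
  ultimately show "gr \<phi> s k w = gr \<phi> s k w'" unfolding gr_def by simp
qed

lemma idle_gr: "idle_time s (gr \<phi> s) \<omega> k = Sg \<phi> s k \<omega>"
  by (induction k) (auto simp: Sg_Suc' step_def gr_def)

lemma shift_gr: "shiftp (gr \<phi> s) w0 = gr \<phi> (step \<phi> s w0)"
  by (auto simp: shiftp_def gr_def fun_eq_iff Sg.simps(2) simp del: Sg_Suc')

lemma dec0_gr: "dec0 (gr \<phi> s) w0 = \<phi> (s + fst w0) (snd w0)"
  by (simp add: dec0_def gr_def)

lemma t1_gr: "t1 s (gr \<phi> s) w0 = step \<phi> s w0"
  by (simp add: t1_def dec0_gr step_def)

end

context tm begin

lemma rho_int:
  assumes S: "0 \<le> S"
  shows "(\<integral>\<tau>. (if \<tau> \<le> S then \<alpha> * (S - \<tau>) + \<beta> else 0) \<partial>rho)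
     = \<alpha> * (S - (1 - exp (- l * S)) / l) + \<beta> * (1 - exp (- l * S))"
proof -
  define h where "h x = l * exp (- x * l) * (\<alpha> * (S - x) + \<beta>)" for x
  define F where "F x = \<alpha> * (exp (- x * l) / l - (S - x) * exp (- x * l)) - \<beta> * exp (- x * l)" for x
  have "(\<integral>\<tau>. (if \<tau> \<le> S then \<alpha> * (S - \<tau>) + \<beta> else 0) \<partial>rho)
      = (\<integral>x. exponential_density l x *\<^sub>R (if x \<le> S then \<alpha> * (S - x) + \<beta> else 0) \<partial>lborel)"
    by (subst integral_density) (auto simp: exponential_density_nonneg l)
  also have "\<dots> = (\<integral>x. indicator {0..S} x *\<^sub>R h x \<partial>lborel)"
    by (intro Bochner_Integration.integral_cong) (auto simp: exponential_density_def indicator_def h_def)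
  also have "\<dots> = (LBINT x=ereal 0..ereal S. h x)"
    using interval_integral_Icc[OF S, of h] by (simp add: set_lebesgue_integral_def)
  also have "\<dots> = F S - F 0"
  proof (rule interval_integral_FTC_finite)
    show "continuous_on {min 0 S..max 0 S} h" unfolding h_def by (intro continuous_intros)
    fix x
    have "(F has_real_derivative h x) (at x)"
      unfolding F_def h_def using l
      by (auto intro!: derivative_eq_intros simp: field_simps)
    then show "(F has_vector_derivative h x) (at x within {min 0 S..max 0 S})"
      by (simp add: has_real_derivative_iff_has_vector_derivative[symmetric] has_field_derivative_at_within)
  qed
  also have "\<dots> = \<alpha> * (S - (1 - exp (- l * S)) / l) + \<beta> * (1 - exp (- l * S))"
    unfolding F_def using l by (simp add: field_simps)
  finally show ?thesis .
qed


lemma nu_fst: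
  fixes g :: "real \<Rightarrow> real"
  assumes [measurable]: "g \<in> borel_measurable borel"
  shows "(\<integral>w. g (fst w) \<partial>nu) = (\<integral>\<tau>. g \<tau> \<partial>rho)"
proof -
  have "(\<integral>\<tau>. g \<tau> \<partial>rho) = (\<integral>\<tau>. g \<tau> \<partial>(distr (rho \<Otimes>\<^sub>M mu) rho fst))"
    by (simp add: pr.M2.distr_pair_fst)
  also have "\<dots> = (\<integral>w. g (fst w) \<partial>(rho \<Otimes>\<^sub>M mu))"
    by (subst integral_distr) auto
  finally show ?thesis by (simp add: nu_eq)
qed

lemma int_bounded_nu:
  fixes f :: "real \<times> real \<Rightarrow> real"
  assumes "f \<in> borel_measurable nu" "AE w in nu. \<bar>f w\<bar> \<le> B"
  shows "integrable nu f"
  using assms prob_nu by (intro finite_measure.integrable_const_bound[where B=B]) (auto simp: prob_space_def)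

lemma nu_prod:
  fixes g k :: "real \<Rightarrow> real"
  assumes [measurable]: "g \<in> borel_measurable borel" "k \<in> borel_measurable borel"
    and gb: "\<And>x. \<bar>g x\<bar> \<le> Bg" and kb: "\<And>y. y \<in> {0..C} \<Longrightarrow> \<bar>k y\<bar> \<le> Bk"
  shows "(\<integral>w. g (fst w) * k (snd w) \<partial>nu) = (\<integral>\<tau>. g \<tau> \<partial>rho) * (\<integral>\<omega>. k (X \<omega>) \<partial>M)"
proof -
  have "integrable nu (\<lambda>w. g (fst w) * k (snd w))"
  proof (rule int_bounded_nu[where B="Bg * Bk"])
    show "AE w in nu. \<bar>g (fst w) * k (snd w)\<bar> \<le> Bg * Bk"
      using AE_good
    proof eventually_elim
      case (elim w)
      then have "\<bar>k (snd w)\<bar> \<le> Bk" by (intro kb) (auto simp: good_def)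
      then show ?case using gb[of "fst w"] by (simp add: abs_mult) (rule mult_mono, auto)
    qed
  qed measurable
  then have i: "integrable (rho \<Otimes>\<^sub>M mu) (\<lambda>w. g (fst w) * k (snd w))" by (simp add: nu_eq)
  have "(\<integral>w. g (fst w) * k (snd w) \<partial>nu) = (\<integral>\<tau>. (\<integral>y. g \<tau> * k y \<partial>mu) \<partial>rho)"
    using pr.integral_fst'[OF i] by (simp add: nu_eq)
  also have "\<dots> = (\<integral>\<tau>. g \<tau> * (\<integral>y. k y \<partial>mu) \<partial>rho)" by simp
  also have "\<dots> = (\<integral>\<tau>. g \<tau> \<partial>rho) * (\<integral>y. k y \<partial>mu)" by simp
  also have "(\<integral>y. k y \<partial>mu) = (\<integral>\<omega>. k (X \<omega>) \<partial>M)" by (subst integral_distr) auto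
  finally show ?thesis .
qed

definition pT :: "real \<Rightarrow> real" where
  "pT a = (\<integral>w. (if a + fst w \<le> T then 1 else 0) \<partial>nu)"

lemma pT_eq: "pT a = (\<integral>\<tau>. (if \<tau> \<le> T - a then 1 else 0) \<partial>rho)"
  unfolding pT_def by (subst nu_fst[symmetric]) (auto intro!: Bochner_Integration.integral_cong)

lemma pT_bounds: "0 \<le> pT a" "pT a < 1"
proof -
  show "0 \<le> pT a" unfolding pT_def by (rule Bochner_Integration.integral_nonneg) auto
  show "pT a < 1"
  proof (cases "a \<le> T")
    case True
    have e: "(\<integral>\<tau>. (if \<tau> \<le> T - a then 0 * ((T - a) - \<tau>) + 1 else 0) \<partial>rho) = 0 * ((T - a) - (1 - exp (- l * (T - a))) / l) + 1 * (1 - exp (- l * (T - a)))"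
      using True by (intro rho_int) simp
    have "pT a = 1 - exp (- l * (T - a))"
      unfolding pT_eq using e by (simp cong: if_cong)
    then show ?thesis by simp
  next
    case False
    have "pT a = 0" unfolding pT_eq
      by (rule integral_eq_zero_AE) (use AE_rho_pos False in \<open>auto elim!: eventually_mono\<close>)
    then show ?thesis by simp
  qed
qed

definition bt :: "(real \<Rightarrow> real) \<Rightarrow> real \<Rightarrow> real \<times> real \<Rightarrow> real" where
  "bt f t w = (if t + fst w \<le> T then max (r (snd w) + f (t + fst w + snd w)) (f (t + fst w)) else 0)"

definition Bop :: "(real \<Rightarrow> real) \<Rightarrow> real \<Rightarrow> real" where
  "Bop f t = (\<integral>w. bt f t w \<partial>nu)"

definition Fb :: "(real \<Rightarrow> real) \<Rightarrow> bool" where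
  "Fb f \<longleftrightarrow> f \<in> borel_measurable borel \<and> (\<forall>a. \<exists>B. \<forall>s\<ge>a. \<bar>f s\<bar> \<le> B)"

lemma bt_meas2:
  assumes [measurable]: "f \<in> borel_measurable borel"
  shows "(\<lambda>z. bt f (fst z) (snd z)) \<in> borel_measurable (borel \<Otimes>\<^sub>M nu)"
proof -
  have "sets (borel \<Otimes>\<^sub>M nu) = sets (borel \<Otimes>\<^sub>M (borel \<Otimes>\<^sub>M borel))"
    by (intro sets_pair_measure_cong sets_nu) auto
  then show ?thesis unfolding bt_def
    by (subst measurable_cong_sets[where M'="borel \<Otimes>\<^sub>M (borel \<Otimes>\<^sub>M borel)"]) (auto, measurable)
qed

lemma bt_meas:
  assumes [measurable]: "f \<in> borel_measurable borel"
  shows "bt f t \<in> borel_measurable nu"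
  unfolding bt_def by measurable

lemma bt_bound:
  assumes "\<forall>s\<ge>t. \<bar>f s\<bar> \<le> B" "good w"
  shows "\<bar>bt f t w\<bar> \<le> K + B"
proof -
  have w: "fst w > 0" "snd w \<in> {0..C}" using assms(2) by (auto simp: good_def)
  then have "\<bar>r (snd w)\<bar> \<le> K" by (intro r_bound) 
  moreover have "\<bar>f (t + fst w + snd w)\<bar> \<le> B" "\<bar>f (t + fst w)\<bar> \<le> B"
    using assms(1) w by auto
  ultimately show ?thesis using K_nonneg unfolding bt_def by (auto simp: abs_le_iff)
qed

lemma Fb_bound: "Fb f \<Longrightarrow> \<exists>B. \<forall>s\<ge>a. \<bar>f s\<bar> \<le> B"
  unfolding Fb_def by blast

lemma bt_int:
  assumes "Fb f" shows "integrable nu (bt f t)"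
proof -
  obtain B where B: "\<forall>s\<ge>t. \<bar>f s\<bar> \<le> B" using Fb_bound[OF assms] by blast
  show ?thesis
    using assms AE_good by (intro int_bounded_nu[where B="K + B"] bt_meas)
      (auto simp: Fb_def elim!: eventually_mono intro: bt_bound[OF B])
qed

lemma Bop_meas:
  assumes "f \<in> borel_measurable borel" shows "Bop f \<in> borel_measurable borel"
  unfolding Bop_def[abs_def]
  by (rule sq.M.borel_measurable_lebesgue_integral) (use bt_meas2[OF assms] in \<open>simp add: split_beta'\<close>)

lemma Bop_zero: "T \<le> t \<Longrightarrow> Bop f t = 0"
  unfolding Bop_def
  by (rule integral_eq_zero_AE) (use AE_good in \<open>auto elim!: eventually_mono simp: bt_def good_def\<close>)

lemma Bop_bound:
  assumes "Fb f" "\<forall>s\<ge>t. \<bar>f s\<bar> \<le> B" shows "\<bar>Bop f t\<bar> \<le> K + B"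
proof -
  have "\<bar>Bop f t\<bar> \<le> (\<integral>w. \<bar>bt f t w\<bar> \<partial>nu)" unfolding Bop_def by (rule integral_abs_bound)
  also have "\<dots> \<le> (\<integral>w. K + B \<partial>nu)"
    using AE_good bt_int[OF assms(1)] by (intro integral_mono_AE) (auto elim!: eventually_mono intro: bt_bound[OF assms(2)])
  also have "\<dots> = K + B" using sq.M.prob_space by simp
  finally show ?thesis .
qed

lemma Fb_Bop: "Fb f \<Longrightarrow> Fb (Bop f)"
  unfolding Fb_def[of "Bop f"]
proof (intro conjI allI)
  assume f: "Fb f"
  then show "Bop f \<in> borel_measurable borel" by (intro Bop_meas) (simp add: Fb_def)
  fix a
  obtain B where "\<forall>s\<ge>a. \<bar>f s\<bar> \<le> B" using Fb_bound[OF f] by blast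
  then have "\<forall>s\<ge>a. \<bar>Bop f s\<bar> \<le> K + B"
    by (intro allI impI Bop_bound[OF f]) auto
  then show "\<exists>B. \<forall>s\<ge>a. \<bar>Bop f s\<bar> \<le> B" by blast
qed

lemma Bop_mono:
  assumes "Fb f" "Fb g" "\<forall>s\<ge>t. f s \<le> g s" shows "Bop f t \<le> Bop g t"
  unfolding Bop_def
proof (rule integral_mono_AE[OF bt_int[OF assms(1)] bt_int[OF assms(2)]])
  show "AE w in nu. bt f t w \<le> bt g t w"
    using AE_good
  proof eventually_elim
    case (elim w)
    then have "fst w > 0" "snd w \<ge> 0" by (auto simp: good_def)
    then have "f (t + fst w + snd w) \<le> g (t + fst w + snd w)" "f (t + fst w) \<le> g (t + fst w)"
      using assms(3) by auto
    then show ?case unfolding bt_def by auto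
  qed
qed

lemma Bop_nonneg:
  assumes "Fb f" "\<forall>s. 0 \<le> f s" shows "0 \<le> Bop f t"
  unfolding Bop_def
  by (rule Bochner_Integration.integral_nonneg) (use assms(2) in \<open>auto simp: bt_def intro: max.coboundedI2\<close>)

lemma Bop_diff:
  assumes "Fb f" "Fb g" "a \<le> t" "0 \<le> \<delta>" "\<forall>s\<ge>a. f s - g s \<le> \<delta>"
  shows "Bop f t - Bop g t \<le> \<delta> * pT a"
proof -
  have "Bop f t - Bop g t = (\<integral>w. bt f t w - bt g t w \<partial>nu)"
    unfolding Bop_def using bt_int[OF assms(1)] bt_int[OF assms(2)] by simp
  also have "\<dots> \<le> (\<integral>w. \<delta> * (if a + fst w \<le> T then 1 else 0) \<partial>nu)"
  proof (rule integral_mono_AE)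
    show "integrable nu (\<lambda>w. bt f t w - bt g t w)"
      using bt_int[OF assms(1)] bt_int[OF assms(2)] by simp
    show "integrable nu (\<lambda>w. \<delta> * (if a + fst w \<le> T then 1 else 0))"
      by (intro int_bounded_nu[where B="\<delta>"]) (use assms(4) in auto)
    show "AE w in nu. bt f t w - bt g t w \<le> \<delta> * (if a + fst w \<le> T then 1 else 0)"
      using AE_good
    proof eventually_elim
      case (elim w)
      then have w: "fst w > 0" "snd w \<ge> 0" by (auto simp: good_def)
      then have "f (t + fst w + snd w) - g (t + fst w + snd w) \<le> \<delta>" "f (t + fst w) - g (t + fst w) \<le> \<delta>"
        using assms(3,5) by auto
      then show ?case unfolding bt_def using assms(3,4) by (auto simp: max_def)
    qed
  qed
  also have "\<dots> = \<delta> * pT a" unfolding pT_def by simp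
  finally show ?thesis .
qed

end

context tm begin

definition Wt :: "real \<Rightarrow> real \<Rightarrow> real" where
  "Wt c s = (if s < T then c * (T - s + C) else 0)"

definition wl :: "real \<Rightarrow> real \<Rightarrow> real" where
  "wl c s = c * max (T - s) 0"

definition EM :: "real \<Rightarrow> real" where
  "EM c = (\<integral>\<omega>. max (r (X \<omega>) - c * X \<omega>) 0 \<partial>M)"

lemma Wt_meas[measurable]: "Wt c \<in> borel_measurable borel"
  unfolding Wt_def[abs_def] by measurable

lemma wl_meas[measurable]: "wl c \<in> borel_measurable borel"
  unfolding wl_def[abs_def] by measurable

lemma Fb_Wt: "0 \<le> c \<Longrightarrow> Fb (Wt c)"
  unfolding Fb_def
proof (intro conjI allI)
  assume c: "0 \<le> c"
  fix a
  have "\<forall>s\<ge>a. \<bar>Wt c s\<bar> \<le> c * (max (T - a) 0 + C)"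
    using c C by (auto simp: Wt_def intro!: mult_left_mono)
  then show "\<exists>B. \<forall>s\<ge>a. \<bar>Wt c s\<bar> \<le> B" by blast
qed simp

lemma Fb_wl: "0 \<le> c \<Longrightarrow> Fb (wl c)"
  unfolding Fb_def
proof (intro conjI allI)
  assume c: "0 \<le> c"
  fix a
  have "\<forall>s\<ge>a. \<bar>wl c s\<bar> \<le> c * max (T - a) 0"
    using c by (auto simp: wl_def abs_mult intro!: mult_left_mono)
  then show "\<exists>B. \<forall>s\<ge>a. \<bar>wl c s\<bar> \<le> B" by blast
qed simp

lemma rplus_bound:
  assumes "y \<in> {0..C}" "0 \<le> c" shows "\<bar>max (r y - c * y) 0\<bar> \<le> K"
proof -
  have "0 \<le> c * y" using assms by auto
  then show ?thesis using r_bound[OF assms(1)] K_nonneg by (auto simp: abs_le_iff max_def)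
qed

lemma P_bounds: "0 \<le> S \<Longrightarrow> 0 \<le> 1 - exp (- l * S) \<and> 1 - exp (- l * S) \<le> 1"
  using l by (auto simp: mult_nonneg_nonneg)

lemma split_int:
  assumes c: "0 \<le> c" and S: "0 \<le> S"
  shows "(\<integral>w. (if fst w \<le> S then \<alpha> * (S - fst w) + \<beta> else 0)
               + (if fst w \<le> S then 1 else 0) * max (r (snd w) - c * snd w) 0 \<partial>nu)
       = \<alpha> * (S - (1 - exp (- l * S)) / l) + \<beta> * (1 - exp (- l * S)) + (1 - exp (- l * S)) * EM c"
proof -
  have i1: "integrable nu (\<lambda>w. (if fst w \<le> S then \<alpha> * (S - fst w) + \<beta> else 0))"
  proof (rule int_bounded_nu[where B="\<bar>\<alpha>\<bar> * S + \<bar>\<beta>\<bar>"])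
    show "AE w in nu. \<bar>if fst w \<le> S then \<alpha> * (S - fst w) + \<beta> else 0\<bar> \<le> \<bar>\<alpha>\<bar> * S + \<bar>\<beta>\<bar>"
      using AE_good
    proof eventually_elim
      case (elim w)
      then have "0 < fst w" by (simp add: good_def)
      then have "fst w \<le> S \<Longrightarrow> \<bar>\<alpha> * (S - fst w)\<bar> \<le> \<bar>\<alpha>\<bar> * S"
        by (auto simp: abs_mult intro!: mult_left_mono)
      then show ?case using S by (auto simp: abs_le_iff)
    qed
  qed measurable
  have i2: "integrable nu (\<lambda>w. (if fst w \<le> S then 1 else 0) * max (r (snd w) - c * snd w) 0)"
  proof (rule int_bounded_nu[where B="K"])
    show "AE w in nu. \<bar>(if fst w \<le> S then 1 else 0) * max (r (snd w) - c * snd w) 0\<bar> \<le> K"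
      using AE_good
    proof eventually_elim
      case (elim w)
      then show ?case using rplus_bound[of "snd w" c] c K_nonneg by (auto simp: good_def)
    qed
  qed measurable
  have e1: "(\<integral>w. (if fst w \<le> S then \<alpha> * (S - fst w) + \<beta> else 0) \<partial>nu)
      = \<alpha> * (S - (1 - exp (- l * S)) / l) + \<beta> * (1 - exp (- l * S))"
    using nu_fst[of "\<lambda>\<tau>. if \<tau> \<le> S then \<alpha> * (S - \<tau>) + \<beta> else 0"] rho_int[OF S] by simp
  have "(\<integral>w. (if fst w \<le> S then 1 else 0) * max (r (snd w) - c * snd w) 0 \<partial>nu)
      = (\<integral>\<tau>. (if \<tau> \<le> S then 1 else 0) \<partial>rho) * EM c"
    unfolding EM_def
    by (rule nu_prod[where Bg=1 and Bk=K]) (use rplus_bound c in auto)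
  also have "(\<integral>\<tau>. (if \<tau> \<le> S then 1 else 0) \<partial>rho) = 1 - exp (- l * S)"
    using rho_int[OF S, of 0 1] by (simp cong: if_cong)
  finally show ?thesis using e1 i1 i2 by simp
qed

lemma super:
  assumes c: "0 \<le> c" and ce: "l * EM c \<le> c"
  shows "Bop (Wt c) t \<le> Wt c t"
proof (cases "T \<le> t")
  case True then show ?thesis by (simp add: Bop_zero Wt_def)
next
  case False
  define S where "S = T - t"
  define P where "P = 1 - exp (- l * S)"
  have S: "0 < S" using False by (simp add: S_def)
  have P: "0 \<le> P" "P \<le> 1" using P_bounds[of S] S by (auto simp: P_def)
  have "Bop (Wt c) t \<le> (\<integral>w. (if fst w \<le> S then c * (S - fst w) + c * C else 0)
               + (if fst w \<le> S then 1 else 0) * max (r (snd w) - c * snd w) 0 \<partial>nu)"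
    unfolding Bop_def
  proof (rule integral_mono_AE)
    show "integrable nu (bt (Wt c) t)" by (rule bt_int[OF Fb_Wt[OF c]])
    show "integrable nu (\<lambda>w. (if fst w \<le> S then c * (S - fst w) + c * C else 0)
               + (if fst w \<le> S then 1 else 0) * max (r (snd w) - c * snd w) 0)"
    proof (rule int_bounded_nu[where B="c * S + c * C + K"])
      show "AE w in nu. \<bar>(if fst w \<le> S then c * (S - fst w) + c * C else 0)
               + (if fst w \<le> S then 1 else 0) * max (r (snd w) - c * snd w) 0\<bar> \<le> c * S + c * C + K"
        using AE_good
      proof eventually_elim
        case (elim w)
        then have w: "0 < fst w" "snd w \<in> {0..C}" by (auto simp: good_def)
        have "fst w \<le> S \<Longrightarrow> c * (S - fst w) \<le> c * S" using c w by (auto intro!: mult_left_mono)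
        moreover have "fst w \<le> S \<Longrightarrow> 0 \<le> c * (S - fst w)" using c by auto
        moreover have "0 \<le> c * C" using c C by auto
        ultimately show ?case using rplus_bound[OF w(2) c] S c by (auto simp: abs_le_iff)
      qed
    qed measurable
    show "AE w in nu. bt (Wt c) t w \<le> (if fst w \<le> S then c * (S - fst w) + c * C else 0)
               + (if fst w \<le> S then 1 else 0) * max (r (snd w) - c * snd w) 0"
      using AE_good
    proof eventually_elim
      case (elim w)
      then have w: "0 < fst w" "0 \<le> snd w" "snd w \<le> C" by (auto simp: good_def)
      show ?case
      proof (cases "fst w \<le> S")
        case True
        have a: "Wt c (t + fst w) \<le> c * (S - fst w + C)"
          using c C True by (auto simp: Wt_def S_def algebra_simps)
        have b: "Wt c (t + fst w + snd w) \<le> c * (S - fst w + C) - c * snd w"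
        proof -
          have b0: "t + fst w + snd w \<le> T + C" using True w by (simp add: S_def)
          show ?thesis using c C True w mult_left_mono[OF b0 c] by (auto simp: Wt_def S_def algebra_simps)
        qed
        have "bt (Wt c) t w \<le> max (r (snd w) + (c * (S - fst w + C) - c * snd w)) (c * (S - fst w + C))"
          unfolding bt_def using a b True by (auto simp: S_def intro: max.mono)
        also have "\<dots> = c * (S - fst w) + c * C + max (r (snd w) - c * snd w) 0"
          by (simp add: max_def algebra_simps)
        finally show ?thesis using True by simp
      next
        case False
        then show ?thesis by (simp add: bt_def S_def)
      qed
    qed
  qed
  also have "\<dots> = c * (S - P / l) + c * C * P + P * EM c"
    unfolding P_def using split_int[OF c, of S c "c * C"] S by simp
  also have "\<dots> \<le> c * (S - P / l) + c * C * P + P * (c / l)"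
    using ce l P by (intro add_left_mono mult_left_mono) (auto simp: field_simps)
  also have "\<dots> = c * S + c * C * P" using l by (simp add: field_simps)
  also have "\<dots> \<le> c * S + c * C" using P c C by (intro add_left_mono) (auto intro: mult_left_le)
  also have "\<dots> = Wt c t" using False by (simp add: Wt_def S_def algebra_simps)
  finally show ?thesis .
qed

lemma sub:
  assumes c: "0 \<le> c" and ce: "c \<le> l * EM c"
  shows "wl c t \<le> Bop (wl c) t"
proof (cases "T \<le> t")
  case True then show ?thesis by (simp add: Bop_zero wl_def)
next
  case False
  define S where "S = T - t"
  define P where "P = 1 - exp (- l * S)"
  have S: "0 < S" using False by (simp add: S_def)
  have P: "0 \<le> P" "P \<le> 1" using P_bounds[of S] S by (auto simp: P_def)
  have "wl c t = c * S" using False by (simp add: wl_def S_def)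
  also have "\<dots> = c * (S - P / l) + P * (c / l)" using l by (simp add: field_simps)
  also have "\<dots> \<le> c * (S - P / l) + 0 * P + P * EM c"
  proof -
    have "P * (c / l) \<le> P * EM c" using ce l P by (intro mult_left_mono) (auto simp: field_simps)
    then show ?thesis by simp
  qed
  also have "\<dots> = (\<integral>w. (if fst w \<le> S then c * (S - fst w) + 0 else 0)
               + (if fst w \<le> S then 1 else 0) * max (r (snd w) - c * snd w) 0 \<partial>nu)"
    unfolding P_def using split_int[OF c, of S c 0] S by simp
  also have "\<dots> \<le> Bop (wl c) t"
    unfolding Bop_def
  proof (rule integral_mono_AE)
    show "integrable nu (bt (wl c) t)" by (rule bt_int[OF Fb_wl[OF c]])
    show "integrable nu (\<lambda>w. (if fst w \<le> S then c * (S - fst w) + 0 else 0)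
               + (if fst w \<le> S then 1 else 0) * max (r (snd w) - c * snd w) 0)"
    proof (rule int_bounded_nu[where B="c * S + K"])
      show "AE w in nu. \<bar>(if fst w \<le> S then c * (S - fst w) + 0 else 0)
               + (if fst w \<le> S then 1 else 0) * max (r (snd w) - c * snd w) 0\<bar> \<le> c * S + K"
        using AE_good
      proof eventually_elim
        case (elim w)
        then have w: "0 < fst w" "snd w \<in> {0..C}" by (auto simp: good_def)
        have "fst w \<le> S \<Longrightarrow> c * (S - fst w) \<le> c * S" using c w by (auto intro!: mult_left_mono)
        moreover have "fst w \<le> S \<Longrightarrow> 0 \<le> c * (S - fst w)" using c by auto
        ultimately show ?case using rplus_bound[OF w(2) c] c S by (auto simp: abs_le_iff)
      qed
    qed measurable
    show "AE w in nu. (if fst w \<le> S then c * (S - fst w) + 0 else 0)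
               + (if fst w \<le> S then 1 else 0) * max (r (snd w) - c * snd w) 0 \<le> bt (wl c) t w"
      using AE_good
    proof eventually_elim
      case (elim w)
      then have w: "0 < fst w" "0 \<le> snd w" "snd w \<le> C" by (auto simp: good_def)
      show ?case
      proof (cases "fst w \<le> S")
        case True
        have a: "wl c (t + fst w) = c * (S - fst w)"
          using c True by (auto simp: wl_def S_def)
        have b0: "T - t - fst w - snd w \<le> max (T - (t + fst w + snd w)) 0" by auto
        have b: "c * (S - fst w) - c * snd w \<le> wl c (t + fst w + snd w)"
          using mult_left_mono[OF b0 c] by (simp add: wl_def S_def algebra_simps)
        have "c * (S - fst w) + max (r (snd w) - c * snd w) 0
            = max (r (snd w) + (c * (S - fst w) - c * snd w)) (c * (S - fst w))"
          by (simp add: max_def algebra_simps)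
        also have "\<dots> \<le> bt (wl c) t w"
          unfolding bt_def using a b True by (auto simp: S_def intro: max.mono)
        finally show ?thesis using True by simp
      next
        case False
        then show ?thesis by (simp add: bt_def S_def)
      qed
    qed
  qed
  finally show ?thesis .
qed

end

context tm begin

lemma EM_int: "0 \<le> c \<Longrightarrow> integrable M (\<lambda>\<omega>. max (r (X \<omega>) - c * X \<omega>) 0)"
  using M Xrange rplus_bound
  by (intro finite_measure.integrable_const_bound[where B=K]) (auto simp: prob_space_def)

definition c0 :: real where "c0 = l * D"

lemma c0_nonneg: "0 \<le> c0" using l ED by (simp add: c0_def)

lemma c0_super: "l * EM c0 \<le> c0"
proof -
  have "EM c0 \<le> (\<integral>\<omega>. D \<partial>M)"
    unfolding EM_def
  proof (rule integral_mono[OF EM_int[OF c0_nonneg]])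
    show "integrable M (\<lambda>\<omega>. D)" using M by (simp add: prob_space_def finite_measure.integrable_const)
    fix \<omega> assume "\<omega> \<in> space M"
    then have "X \<omega> \<in> {0..C}" using Xrange by auto
    moreover have "0 \<le> c0 * X \<omega>" using c0_nonneg \<open>X \<omega> \<in> {0..C}\<close> by auto
    ultimately show "max (r (X \<omega>) - c0 * X \<omega>) 0 \<le> D" using rrange ED by force
  qed
  also have "\<dots> = D" using M by (simp add: prob_space.prob_space)
  finally show ?thesis using l by (simp add: c0_def)
qed

lemma abs_between: "0 \<le> (x::real) \<Longrightarrow> x \<le> y \<Longrightarrow> \<bar>y\<bar> \<le> B \<Longrightarrow> \<bar>x\<bar> \<le> B"
  by auto

definition uu :: "nat \<Rightarrow> real \<Rightarrow> real" where
  "uu n = (Bop ^^ n) (\<lambda>_. 0)"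

lemma uu_Suc: "uu (Suc n) = Bop (uu n)" by (simp add: uu_def)

lemma uu_props: "Fb (uu n) \<and> (\<forall>s. 0 \<le> uu n s \<and> uu n s \<le> Wt c0 s)"
proof (induction n)
  case 0
  have "Fb (\<lambda>_. 0)" by (auto simp: Fb_def)
  moreover have "0 \<le> Wt c0 s" for s using c0_nonneg C by (auto simp: Wt_def)
  ultimately show ?case by (simp add: uu_def)
next
  case (Suc n)
  then have f: "Fb (uu n)" and b: "\<And>s. 0 \<le> uu n s" "\<And>s. uu n s \<le> Wt c0 s" by auto
  have "Bop (uu n) s \<le> Wt c0 s" for s
    using Bop_mono[OF f Fb_Wt[OF c0_nonneg], of s] b super[OF c0_nonneg c0_super, of s] by auto
  then show ?case using Fb_Bop[OF f] Bop_nonneg[OF f] b by (auto simp: uu_Suc)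
qed

lemma uu_mono: "uu n s \<le> uu (Suc n) s"
proof (induction n arbitrary: s)
  case 0 then show ?case using uu_props[of 1] by (simp add: uu_def)
next
  case (Suc n)
  show ?case unfolding uu_Suc[of "Suc n"] uu_Suc[of n]
    using Bop_mono[of "uu n" "uu (Suc n)" s] uu_props[of n] uu_props[of "Suc n"] Suc by (simp add: uu_Suc)
qed

definition u :: "real \<Rightarrow> real" where "u s = (SUP n. uu n s)"

lemma uu_lim: "(\<lambda>n. uu n s) \<longlonglongrightarrow> u s"
  unfolding u_def
proof (rule LIMSEQ_incseq_SUP)
  show "bdd_above (range (\<lambda>n. uu n s))" using uu_props by (auto intro!: bdd_aboveI[where M="Wt c0 s"])
  show "incseq (\<lambda>n. uu n s)" using uu_mono by (simp add: incseq_SucI)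
qed

lemma u_bounds: "0 \<le> u s" "u s \<le> Wt c0 s"
  using uu_props by (auto intro!: LIMSEQ_le_const[OF uu_lim] LIMSEQ_le_const2[OF uu_lim])

lemma u_meas[measurable]: "u \<in> borel_measurable borel"
  by (rule borel_measurable_LIMSEQ_real[OF uu_lim]) (use uu_props in \<open>auto simp: Fb_def\<close>)

lemma Fb_u: "Fb u"
  unfolding Fb_def
proof (intro conjI allI)
  fix a
  obtain B where B: "\<forall>s\<ge>a. \<bar>Wt c0 s\<bar> \<le> B" using Fb_bound[OF Fb_Wt[OF c0_nonneg]] by blast
  have "\<forall>s\<ge>a. \<bar>u s\<bar> \<le> B"
    using B u_bounds by (metis abs_between)
  then show "\<exists>B. \<forall>s\<ge>a. \<bar>u s\<bar> \<le> B" by blast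
qed simp

lemma u_fix: "Bop u t = u t"
proof -
  obtain B where B: "\<forall>s\<ge>t. \<bar>Wt c0 s\<bar> \<le> B" using Fb_bound[OF Fb_Wt[OF c0_nonneg]] by blast
  have Bu: "\<forall>s\<ge>t. \<bar>uu n s\<bar> \<le> B" for n using B uu_props[of n] by (metis abs_between)
  have "(\<lambda>n. Bop (uu n) t) \<longlonglongrightarrow> Bop u t"
    unfolding Bop_def
  proof (rule integral_dominated_convergence[where w="\<lambda>_. K + B"])
    show "bt u t \<in> borel_measurable nu" by (rule bt_meas) simp
    show "bt (uu n) t \<in> borel_measurable nu" for n by (rule bt_meas) (use uu_props in \<open>simp add: Fb_def\<close>)
    show "integrable nu (\<lambda>_. K + B)" using prob_nu by (simp add: prob_space_def finite_measure.integrable_const)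
    show "AE w in nu. (\<lambda>n. bt (uu n) t w) \<longlonglongrightarrow> bt u t w"
      unfolding bt_def by (intro AE_I2) (auto intro!: tendsto_intros uu_lim)
    show "AE w in nu. norm (bt (uu n) t w) \<le> K + B" for n
      using AE_good by eventually_elim (use bt_bound[OF Bu] in auto)
  qed
  moreover have "(\<lambda>n. Bop (uu n) t) \<longlonglongrightarrow> u t"
    using uu_lim[of t] unfolding uu_Suc[symmetric] by (rule LIMSEQ_Suc)
  ultimately show ?thesis by (rule LIMSEQ_unique)
qed

lemma u_zero: "T \<le> t \<Longrightarrow> u t = 0"
  using u_fix[of t] Bop_zero[of t u] by simp

lemma contraction:
  fixes \<psi> :: "'x \<Rightarrow> real"
  assumes p: "0 \<le> p" "p < 1" and bd: "\<forall>x\<in>A. \<psi> x \<le> B"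
    and st: "\<And>\<delta>. 0 \<le> \<delta> \<Longrightarrow> \<forall>x\<in>A. \<psi> x \<le> \<delta> \<Longrightarrow> \<forall>x\<in>A. \<psi> x \<le> p * \<delta>"
  shows "\<forall>x\<in>A. \<psi> x \<le> 0"
proof
  fix x assume x: "x \<in> A"
  define B0 where "B0 = max B 0"
  have "\<forall>y\<in>A. \<psi> y \<le> p ^ n * B0" for n
  proof (induction n)
    case 0 then show ?case using bd by (auto simp: B0_def)
  next
    case (Suc n)
    have "0 \<le> p ^ n * B0" using p by (simp add: B0_def)
    from st[OF this Suc] show ?case by (simp add: algebra_simps)
  qed
  then have le: "\<And>n. \<psi> x \<le> p ^ n * B0" using x by auto
  have "(\<lambda>n. p ^ n * B0) \<longlonglongrightarrow> 0 * B0"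
    using p by (intro tendsto_intros) auto
  then show "\<psi> x \<le> 0" using le by (auto intro: LIMSEQ_le_const)
qed

lemma u_ge_wl:
  assumes c: "0 \<le> c" "c \<le> l * EM c" shows "wl c s \<le> u s"
proof -
  have "\<forall>x\<in>{s..}. wl c x - u x \<le> 0"
  proof (rule contraction[where p="pT s" and B="c * max (T - s) 0"])
    show "0 \<le> pT s" "pT s < 1" by (rule pT_bounds)+
    show "\<forall>x\<in>{s..}. wl c x - u x \<le> c * max (T - s) 0"
    proof
      fix x assume "x \<in> {s..}"
      then have "max (T - x) 0 \<le> max (T - s) 0" by auto
      from mult_left_mono[OF this c(1)] u_bounds(1)[of x] show "wl c x - u x \<le> c * max (T - s) 0"
        by (simp add: wl_def)
    qed
    fix \<delta> :: real assume d: "0 \<le> \<delta>" "\<forall>x\<in>{s..}. wl c x - u x \<le> \<delta>"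
    show "\<forall>x\<in>{s..}. wl c x - u x \<le> pT s * \<delta>"
    proof
      fix x assume x: "x \<in> {s..}"
      have "wl c x - u x \<le> Bop (wl c) x - Bop u x" using sub[OF c, of x] u_fix[of x] by simp
      also have "\<dots> \<le> \<delta> * pT s" using d x by (intro Bop_diff[OF Fb_wl[OF c(1)] Fb_u]) auto
      finally show "wl c x - u x \<le> pT s * \<delta>" by (simp add: mult.commute)
    qed
  qed
  then show ?thesis by auto
qed

lemma u_le_Wt:
  assumes c: "0 \<le> c" "l * EM c \<le> c" shows "u s \<le> Wt c s"
proof -
  obtain B where B: "\<forall>x\<ge>s. \<bar>Wt c0 x\<bar> \<le> B" using Fb_bound[OF Fb_Wt[OF c0_nonneg]] by blast
  have "\<forall>x\<in>{s..}. u x - Wt c x \<le> 0"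
  proof (rule contraction[where p="pT s" and B="B"])
    show "0 \<le> pT s" "pT s < 1" by (rule pT_bounds)+
    have "0 \<le> Wt c x" for x using c C by (auto simp: Wt_def)
    then show "\<forall>x\<in>{s..}. u x - Wt c x \<le> B"
      using B u_bounds by (metis abs_between abs_ge_self atLeast_iff diff_le_eq le_add_same_cancel1 order_trans)
    fix \<delta> :: real assume d: "0 \<le> \<delta>" "\<forall>x\<in>{s..}. u x - Wt c x \<le> \<delta>"
    show "\<forall>x\<in>{s..}. u x - Wt c x \<le> pT s * \<delta>"
    proof
      fix x assume x: "x \<in> {s..}"
      have "u x - Wt c x \<le> Bop u x - Bop (Wt c) x" using super[OF c, of x] u_fix[of x] by simp
      also have "\<dots> \<le> \<delta> * pT s" using d x by (intro Bop_diff[OF Fb_u Fb_Wt[OF c(1)]]) auto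
      finally show "u x - Wt c x \<le> pT s * \<delta>" by (simp add: mult.commute)
    qed
  qed
  then show ?thesis by auto
qed

end

context tm begin

lemma Qs_nonneg: "0 \<le> Qs"
  unfolding Qs_def using q_nonneg q_less1
  by (intro suminf_nonneg) (simp_all only: power_Suc, intro summable_mult summable_geometric, auto)

lemma J_upper: "adm d \<Longrightarrow> a \<le> x \<Longrightarrow> J x d \<le> K * (exp (T - a) * Qs)"
proof -
  assume "adm d" "a \<le> x"
  have "J x d \<le> K * (exp (T - x) * Qs)" using J_bound[OF \<open>adm d\<close>, of x] by simp
  also have "\<dots> \<le> K * (exp (T - a) * Qs)"
    using \<open>a \<le> x\<close> K_nonneg Qs_nonneg by (intro mult_left_mono mult_right_mono) auto
  finally show ?thesis .
qed

lemma J_le_u: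
  assumes "adm d" shows "J s d \<le> u s"
proof -
  let ?A = "{(x, d). s \<le> x \<and> adm d}"
  have "\<forall>z\<in>?A. J (fst z) (snd z) - u (fst z) \<le> 0"
  proof (rule contraction[where p="pT s" and B="K * (exp (T - s) * Qs)"])
    show "0 \<le> pT s" "pT s < 1" by (rule pT_bounds)+
    show "\<forall>z\<in>?A. J (fst z) (snd z) - u (fst z) \<le> K * (exp (T - s) * Qs)"
    proof
      fix z assume "z \<in> ?A"
      then obtain x d where z: "z = (x, d)" "s \<le> x" "adm d" by auto
      then show "J (fst z) (snd z) - u (fst z) \<le> K * (exp (T - s) * Qs)"
        using J_upper[of d s x] u_bounds(1)[of x] by simp
    qed
    fix \<delta> :: real
    assume d0: "0 \<le> \<delta>" and hyp: "\<forall>z\<in>?A. J (fst z) (snd z) - u (fst z) \<le> \<delta>"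
    show "\<forall>z\<in>?A. J (fst z) (snd z) - u (fst z) \<le> pT s * \<delta>"
    proof
      fix z assume "z \<in> ?A"
      then obtain x d where z: "z = (x, d)" and x: "s \<le> x" and d: "adm d" by auto
      have "J x d - u x = (\<integral>w. IF x d w - bt u x w \<partial>nu)"
        using J_rec[OF d, of x] bt_int[OF Fb_u, of x] u_fix[of x] by (simp add: Bop_def)
      also have "\<dots> \<le> (\<integral>w. \<delta> * (if s + fst w \<le> T then 1 else 0) \<partial>nu)"
      proof (rule integral_mono_AE)
        show "integrable nu (\<lambda>w. IF x d w - bt u x w)"
          using J_rec(2)[OF d, of x] bt_int[OF Fb_u, of x] by simp
        show "integrable nu (\<lambda>w. \<delta> * (if s + fst w \<le> T then 1 else 0))"
          by (intro int_bounded_nu[where B="\<delta>"]) (use d0 in auto)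
        show "AE w in nu. IF x d w - bt u x w \<le> \<delta> * (if s + fst w \<le> T then 1 else 0)"
          using AE_good J_rec(3)[OF d, of x]
        proof eventually_elim
          case (elim w)
          then have w: "0 < fst w" "0 \<le> snd w" by (auto simp: good_def)
          have dd: "adm (shiftp d w)" by (rule adm_shift[OF d])
          show ?case
          proof (cases "x + fst w \<le> T")
            case True
            have "t1 x d w \<ge> s" using w x by (auto simp: t1_def)
            then have "J (t1 x d w) (shiftp d w) - u (t1 x d w) \<le> \<delta>"
              using hyp dd by (metis (no_types, lifting) case_prod_conv fst_conv mem_Collect_eq snd_conv)
            moreover have "first x d w + u (t1 x d w) \<le> bt u x w"
              using True by (auto simp: first_def t1_def bt_def)
            ultimately show ?thesis using elim(2) True x by auto
          next
            case False
            have "t1 x d w \<ge> T" using False w by (auto simp: t1_def)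
            then have "J (t1 x d w) (shiftp d w) = 0" by (rule J_zero)
            then show ?thesis using elim(2) False d0 by (auto simp: first_def bt_def)
          qed
        qed
      qed
      also have "\<dots> = pT s * \<delta>" unfolding pT_def by simp
      finally show "J (fst z) (snd z) - u (fst z) \<le> pT s * \<delta>" using z by simp
    qed
  qed
  then show ?thesis using assms by auto
qed

definition phu :: "real \<Rightarrow> real \<Rightarrow> bool" where
  "phu s x \<longleftrightarrow> s \<le> T \<and> u s \<le> r x + u (s + x)"

lemma phu_meas: "Measurable.pred (borel \<Otimes>\<^sub>M borel) (\<lambda>z. phu (fst z) (snd z))"
  unfolding phu_def by measurable

lemma adm_gru: "adm (gr phu s)" by (rule adm_gr[OF phu_meas])

lemma J_gr:
  "J s (gr phu s) = u s"
proof -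
  obtain Bu where Bu: "\<forall>x\<ge>s. \<bar>u x\<bar> \<le> Bu" using Fb_bound[OF Fb_u] by blast
  have "\<forall>x\<in>{s..}. \<bar>J x (gr phu x) - u x\<bar> \<le> 0"
  proof (rule contraction[where p="pT s" and B="K * (exp (T - s) * Qs) + Bu"])
    show "0 \<le> pT s" "pT s < 1" by (rule pT_bounds)+
    show "\<forall>x\<in>{s..}. \<bar>J x (gr phu x) - u x\<bar> \<le> K * (exp (T - s) * Qs) + Bu"
    proof
      fix x assume x: "x \<in> {s..}"
      have "\<bar>J x (gr phu x)\<bar> \<le> K * (exp (T - x) * Qs)" by (rule J_bound[OF adm_gru])
      also have "\<dots> \<le> K * (exp (T - s) * Qs)"
        using x K_nonneg Qs_nonneg by (intro mult_left_mono mult_right_mono) auto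
      moreover have "\<bar>u x\<bar> \<le> Bu" using Bu x by simp
      ultimately show "\<bar>J x (gr phu x) - u x\<bar> \<le> K * (exp (T - s) * Qs) + Bu" by linarith
    qed
    fix \<delta> :: real
    assume d0: "0 \<le> \<delta>" and hyp: "\<forall>x\<in>{s..}. \<bar>J x (gr phu x) - u x\<bar> \<le> \<delta>"
    show "\<forall>x\<in>{s..}. \<bar>J x (gr phu x) - u x\<bar> \<le> pT s * \<delta>"
    proof
      fix x assume x: "x \<in> {s..}"
      let ?g = "gr phu x"
      have d: "adm ?g" by (rule adm_gru)
      have "\<bar>J x ?g - u x\<bar> = \<bar>\<integral>w. IF x ?g w - bt u x w \<partial>nu\<bar>"
        using J_rec[OF d, of x] bt_int[OF Fb_u, of x] u_fix[of x] by (simp add: Bop_def)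
      also have "\<dots> \<le> (\<integral>w. \<bar>IF x ?g w - bt u x w\<bar> \<partial>nu)" by (rule integral_abs_bound)
      also have "\<dots> \<le> (\<integral>w. \<delta> * (if s + fst w \<le> T then 1 else 0) \<partial>nu)"
      proof (rule integral_mono_AE)
        show "integrable nu (\<lambda>w. \<bar>IF x ?g w - bt u x w\<bar>)"
          using J_rec(2)[OF d, of x] bt_int[OF Fb_u, of x] by simp
        show "integrable nu (\<lambda>w. \<delta> * (if s + fst w \<le> T then 1 else 0))"
          by (intro int_bounded_nu[where B="\<delta>"]) (use d0 in auto)
        show "AE w in nu. \<bar>IF x ?g w - bt u x w\<bar> \<le> \<delta> * (if s + fst w \<le> T then 1 else 0)"
          using AE_good J_rec(3)[OF d, of x]
        proof eventually_elim
          case (elim w)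
          then have w: "0 < fst w" "0 \<le> snd w" by (auto simp: good_def)
          have IFe: "IF x ?g w = first x ?g w + J (step phu x w) (gr phu (step phu x w))"
            using elim(2) by (simp add: shift_gr t1_gr)
          show ?case
          proof (cases "x + fst w \<le> T")
            case True
            have "step phu x w \<ge> s" using w x by (auto simp: step_def)
            then have "\<bar>J (step phu x w) (gr phu (step phu x w)) - u (step phu x w)\<bar> \<le> \<delta>"
              using hyp by auto
            moreover have "first x ?g w + u (step phu x w) = bt u x w"
              using True by (auto simp: first_def step_def bt_def dec0_gr phu_def)
            ultimately show ?thesis using IFe True x by auto
          next
            case False
            have "step phu x w \<ge> T" using False w by (auto simp: step_def)
            then have "J (step phu x w) (gr phu (step phu x w)) = 0" by (rule J_zero)
            then show ?thesis using IFe False d0 by (auto simp: first_def bt_def)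
          qed
        qed
      qed
      also have "\<dots> = pT s * \<delta>" unfolding pT_def by simp
      finally show "\<bar>J x ?g - u x\<bar> \<le> pT s * \<delta>" .
    qed
  qed
  then show ?thesis by auto
qed

lemma value_eq_u: "value_fn l M X r T t = u t"
proof (cases "T \<le> t")
  case True then show ?thesis by (simp add: value_fn_def u_zero)
next
  case False
  have eq: "{d. admissible_policy (sample_space l M X) d} = {d. adm d}"
    by (simp add: adm_def Om_def)
  have "(SUP d\<in>{d. adm d}. J t d) = u t"
  proof (rule antisym)
    show "(SUP d\<in>{d. adm d}. J t d) \<le> u t"
      using adm_gru by (intro cSUP_least) (auto intro: J_le_u)
    have "J t (gr phu t) \<le> (SUP d\<in>{d. adm d}. J t d)"
      using adm_gru J_le_u by (intro cSUP_upper bdd_aboveI2[where M="u t"]) auto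
    then show "u t \<le> (SUP d\<in>{d. adm d}. J t d)" by (simp add: J_gr)
  qed
  then show ?thesis using False by (simp add: value_fn_def eq J_def Om_def)
qed

end

context tm begin

definition gg :: "real \<Rightarrow> real" where
  "gg s = (\<integral>\<omega>. max (r (X \<omega>) + u (s + X \<omega>)) (u s) \<partial>M)"

lemma gg_meas[measurable]: "gg \<in> borel_measurable borel"
proof -
  interpret Ms: sigma_finite_measure M using M by (rule prob_space_imp_sigma_finite)
  show ?thesis unfolding gg_def[abs_def]
    by (rule Ms.borel_measurable_lebesgue_integral) measurable
qed

lemma gg_int:
  assumes "\<forall>x\<ge>s. \<bar>u x\<bar> \<le> B"
  shows "integrable M (\<lambda>\<omega>. max (r (X \<omega>) + u (s + X \<omega>)) (u s))"
proof -
  have "\<bar>max (r (X \<omega>) + u (s + X \<omega>)) (u s)\<bar> \<le> K + B" if "\<omega> \<in> space M" for \<omega>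
  proof -
    have x: "X \<omega> \<in> {0..C}" using Xrange that by auto
    then have "\<bar>r (X \<omega>)\<bar> \<le> K" by (rule r_bound)
    moreover have "\<bar>u (s + X \<omega>)\<bar> \<le> B" "\<bar>u s\<bar> \<le> B" using assms x by auto
    ultimately show ?thesis using K_nonneg by (auto simp: abs_le_iff)
  qed
  then show ?thesis using M
    by (intro finite_measure.integrable_const_bound[where B="K + B"]) (auto simp: prob_space_def)
qed

lemma gg_bound:
  assumes "\<forall>x\<ge>s. \<bar>u x\<bar> \<le> B" shows "\<bar>gg s\<bar> \<le> K + B"
proof -
  have "\<bar>gg s\<bar> \<le> (\<integral>\<omega>. \<bar>max (r (X \<omega>) + u (s + X \<omega>)) (u s)\<bar> \<partial>M)"
    unfolding gg_def by (rule integral_abs_bound)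
  also have "\<dots> \<le> (\<integral>\<omega>. K + B \<partial>M)"
  proof (rule integral_mono)
    show "integrable M (\<lambda>\<omega>. \<bar>max (r (X \<omega>) + u (s + X \<omega>)) (u s)\<bar>)" using gg_int[OF assms] by simp
    show "integrable M (\<lambda>\<omega>. K + B)" using M by (simp add: prob_space_def finite_measure.integrable_const)
    fix \<omega> assume "\<omega> \<in> space M"
    then have x: "X \<omega> \<in> {0..C}" using Xrange by auto
    then have "\<bar>r (X \<omega>)\<bar> \<le> K" by (rule r_bound)
    moreover have "\<bar>u (s + X \<omega>)\<bar> \<le> B" "\<bar>u s\<bar> \<le> B" using assms x by auto
    ultimately show "\<bar>max (r (X \<omega>) + u (s + X \<omega>)) (u s)\<bar> \<le> K + B" using K_nonneg by (auto simp: abs_le_iff)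
  qed
  also have "\<dots> = K + B" using M by (simp add: prob_space.prob_space)
  finally show ?thesis .
qed

lemma u_rep1: "u t = (\<integral>\<tau>. (if t + \<tau> \<le> T then gg (t + \<tau>) else 0) \<partial>rho)"
proof -
  have i: "integrable (rho \<Otimes>\<^sub>M mu) (bt u t)" using bt_int[OF Fb_u, of t] by (simp add: nu_eq)
  have "u t = (\<integral>w. bt u t w \<partial>(rho \<Otimes>\<^sub>M mu))" using u_fix[of t] by (simp add: Bop_def nu_eq)
  also have "\<dots> = (\<integral>\<tau>. (\<integral>x. bt u t (\<tau>, x) \<partial>mu) \<partial>rho)" using pr.integral_fst'[OF i] by simp
  also have "\<dots> = (\<integral>\<tau>. (if t + \<tau> \<le> T then gg (t + \<tau>) else 0) \<partial>rho)"
  proof (rule Bochner_Integration.integral_cong[OF refl])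
    fix \<tau>
    show "(\<integral>x. bt u t (\<tau>, x) \<partial>mu) = (if t + \<tau> \<le> T then gg (t + \<tau>) else 0)"
    proof -
      have m: "(\<lambda>x. bt u t (\<tau>, x)) \<in> borel_measurable borel" unfolding bt_def fst_conv snd_conv by measurable
      show ?thesis by (subst integral_distr[OF Xm m]) (auto simp: bt_def gg_def add.assoc)
    qed
  qed
  finally show ?thesis .
qed

definition hh :: "real \<Rightarrow> real" where "hh s = l * exp (- l * s) * gg s"

lemma hh_meas[measurable]: "hh \<in> borel_measurable borel"
  unfolding hh_def[abs_def] by measurable

lemma u_rep2:
  assumes "t \<le> T" shows "u t = exp (l * t) * (LINT s:{t..T}|lborel. hh s)"
proof -
  define F where "F \<tau> = exponential_density l \<tau> * (if t + \<tau> \<le> T then gg (t + \<tau>) else 0)" for \<tau>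
  have "u t = (\<integral>\<tau>. F \<tau> \<partial>lborel)"
    unfolding u_rep1 F_def by (subst integral_density) (auto simp: exponential_density_nonneg l)
  also have "\<dots> = (\<integral>s. F (-t + 1 * s) \<partial>lborel)"
    by (subst lborel_integral_real_affine[where c=1 and t="-t"]) auto
  also have "\<dots> = (\<integral>s. exp (l * t) * (indicator {t..T} s *\<^sub>R hh s) \<partial>lborel)"
  proof (rule Bochner_Integration.integral_cong[OF refl])
    fix s
    have "exp (l * t) * (l * exp (- l * s)) = l * exp (- ((s - t) * l))"
      by (simp add: exp_add[symmetric] algebra_simps)
    then show "F (-t + 1 * s) = exp (l * t) * (indicator {t..T} s *\<^sub>R hh s)"
      by (auto simp: F_def exponential_density_def indicator_def hh_def algebra_simps)
  qed
  also have "\<dots> = exp (l * t) * (LINT s:{t..T}|lborel. hh s)"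
    by (simp add: set_lebesgue_integral_def)
  finally show ?thesis .
qed

lemma hh_bound_ex: "\<exists>Bd. \<forall>s\<ge>a. \<bar>hh s\<bar> \<le> Bd"
proof -
  obtain B where B: "\<forall>x\<ge>a. \<bar>u x\<bar> \<le> B" using Fb_bound[OF Fb_u] by blast
  have "\<bar>hh s\<bar> \<le> l * exp (- l * a) * (K + B)" if "a \<le> s" for s
  proof -
    have "\<bar>gg s\<bar> \<le> K + B" using B that by (intro gg_bound) auto
    moreover have "exp (- l * s) \<le> exp (- l * a)" using l that by auto
    ultimately show ?thesis unfolding hh_def abs_mult using l
      by (intro mult_mono) auto
  qed
  then show ?thesis by blast
qed

lemma hh_setint: "set_integrable lborel {a..b} hh"
proof -
  obtain Bd where Bd: "\<forall>s\<ge>a. \<bar>hh s\<bar> \<le> Bd" using hh_bound_ex by blast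
  show ?thesis unfolding set_integrable_def
  proof (rule Bochner_Integration.integrable_bound)
    show "integrable lborel (\<lambda>x. Bd * indicator {a..b} x :: real)"
      by (intro integrable_mult_right integrable_real_indicator) (auto simp: emeasure_lborel_Icc_eq)
    show "(\<lambda>x. indicator {a..b} x *\<^sub>R hh x) \<in> borel_measurable lborel" by measurable
    show "AE x in lborel. norm (indicator {a..b} x *\<^sub>R hh x) \<le> norm (Bd * indicator {a..b} x :: real)"
      using Bd by (intro AE_I2) (auto simp: indicator_def abs_le_iff)
  qed
qed

lemma hh_HK: "hh integrable_on {a..b}" "(LINT s:{a..b}|lborel. hh s) = integral {a..b} hh"
  using set_borel_integral_eq_integral[OF hh_setint] by auto

lemma u_rep3: "t \<le> T \<Longrightarrow> u t = exp (l * t) * integral {t..T} hh"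
  using u_rep2 hh_HK by simp

lemma u_cont_on: "a \<le> T \<Longrightarrow> continuous_on {a..} u"
proof -
  assume a: "a \<le> T"
  have c1: "continuous_on {a..T} u"
  proof -
    have "continuous_on {a..T} (\<lambda>x. exp (l * x) * integral {x..T} hh)"
      by (intro continuous_intros indefinite_integral_continuous_1' hh_HK)
    then show ?thesis by (rule continuous_on_cong[THEN iffD1, rotated 2]) (auto simp: u_rep3)
  qed
  have c2: "continuous_on {T..} u"
    by (rule continuous_on_cong[THEN iffD1, of _ _ "\<lambda>_. 0", rotated 2]) (auto simp: u_zero)
  have "continuous_on ({a..T} \<union> {T..}) u" by (rule continuous_on_closed_Un[OF _ _ c1 c2]) auto
  moreover have "{a..T} \<union> {T..} = {a..}" using a by auto
  ultimately show ?thesis by simp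
qed

lemma u_cont: "isCont u t"
proof -
  have "continuous_on {min (t - 1) T..} u" by (rule u_cont_on) auto
  moreover have "t \<in> interior {min (t - 1) T..}" by auto
  ultimately show ?thesis by (rule continuous_on_interior)
qed

lemma max_diff_le: "\<bar>max (a::real) b - max c d\<bar> \<le> max \<bar>a - c\<bar> \<bar>b - d\<bar>"
  by (auto simp: max_def abs_le_iff)

lemma max_half: "(x::real) \<le> max a b \<Longrightarrow> a < e / 2 \<Longrightarrow> b < e / 2 \<Longrightarrow> x \<le> e / 2"
  by (simp add: max_def split: if_splits)

lemma gg_cont: "isCont gg s"
  unfolding continuous_at_eps_delta
proof (intro allI impI)
  fix e :: real assume e: "0 < e"
  let ?S = "{s - 1 .. s + 1 + C}"
  have "uniformly_continuous_on ?S u"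
    by (intro compact_uniformly_continuous continuous_at_imp_continuous_on ballI u_cont) auto
  then obtain d where d: "d > 0" and dd: "\<forall>x\<in>?S. \<forall>x'\<in>?S. dist x' x < d \<longrightarrow> dist (u x') (u x) < e / 2"
    unfolding uniformly_continuous_on_def using e by (meson half_gt_zero)
  obtain B where B: "\<forall>x\<ge>s - 1. \<bar>u x\<bar> \<le> B" using Fb_bound[OF Fb_u] by blast
  show "\<exists>d>0. \<forall>x'. dist x' s < d \<longrightarrow> dist (gg x') (gg s) < e"
  proof (intro exI[of _ "min d 1"] conjI allI impI)
    show "0 < min d 1" using d by auto
    fix s' assume s': "dist s' s < min d 1"
    have i1: "integrable M (\<lambda>\<omega>. max (r (X \<omega>) + u (s' + X \<omega>)) (u s'))"
      using B s' by (intro gg_int[where B=B]) (auto simp: dist_real_def)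
    have i2: "integrable M (\<lambda>\<omega>. max (r (X \<omega>) + u (s + X \<omega>)) (u s))"
      using B by (intro gg_int[where B=B]) auto
    have "\<bar>gg s' - gg s\<bar> = \<bar>\<integral>\<omega>. max (r (X \<omega>) + u (s' + X \<omega>)) (u s') - max (r (X \<omega>) + u (s + X \<omega>)) (u s) \<partial>M\<bar>"
      unfolding gg_def using i1 i2 by simp
    also have "\<dots> \<le> (\<integral>\<omega>. \<bar>max (r (X \<omega>) + u (s' + X \<omega>)) (u s') - max (r (X \<omega>) + u (s + X \<omega>)) (u s)\<bar> \<partial>M)"
      by (rule integral_abs_bound)
    also have "\<dots> \<le> (\<integral>\<omega>. e / 2 \<partial>M)"
    proof (rule integral_mono)
      show "integrable M (\<lambda>\<omega>. \<bar>max (r (X \<omega>) + u (s' + X \<omega>)) (u s') - max (r (X \<omega>) + u (s + X \<omega>)) (u s)\<bar>)"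
        using i1 i2 by simp
      show "integrable M (\<lambda>\<omega>. e / 2)" using M by (simp add: prob_space_def finite_measure.integrable_const)
      fix \<omega> assume "\<omega> \<in> space M"
      then have x: "X \<omega> \<in> {0..C}" using Xrange by auto
      have "\<bar>u (s' + X \<omega>) - u (s + X \<omega>)\<bar> < e / 2"
        using dd[rule_format, of "s + X \<omega>" "s' + X \<omega>"] x s' by (auto simp: dist_real_def abs_less_iff)
      moreover have "\<bar>u s' - u s\<bar> < e / 2"
        using dd[rule_format, of "s" "s'"] s' C by (auto simp: dist_real_def abs_less_iff)
      ultimately show "\<bar>max (r (X \<omega>) + u (s' + X \<omega>)) (u s') - max (r (X \<omega>) + u (s + X \<omega>)) (u s)\<bar> \<le> e / 2"
        by (intro max_half[OF max_diff_le]) simp_all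
    qed
    also have "\<dots> = e / 2" using M by (simp add: prob_space.prob_space)
    finally show "dist (gg s') (gg s) < e" using e by (simp add: dist_real_def)
  qed
qed

lemma hh_cont: "continuous_on A hh"
  unfolding hh_def by (intro continuous_at_imp_continuous_on ballI continuous_intros gg_cont)

end

context tm begin

lemma gg_minus_u: "gg t - u t = (\<integral>\<omega>. max (r (X \<omega>) + u (t + X \<omega>) - u t) 0 \<partial>M)"
proof -
  obtain B where B: "\<forall>x\<ge>t. \<bar>u x\<bar> \<le> B" using Fb_bound[OF Fb_u] by blast
  have i: "integrable M (\<lambda>\<omega>. max (r (X \<omega>) + u (t + X \<omega>)) (u t))" by (rule gg_int[OF B])
  have ic: "integrable M (\<lambda>\<omega>. u t)" using M by (simp add: prob_space_def finite_measure.integrable_const)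
  have "(\<integral>\<omega>. max (r (X \<omega>) + u (t + X \<omega>) - u t) 0 \<partial>M)
      = (\<integral>\<omega>. max (r (X \<omega>) + u (t + X \<omega>)) (u t) - u t \<partial>M)"
    by (intro Bochner_Integration.integral_cong) (auto simp: max_def)
  also have "\<dots> = gg t - u t"
    unfolding gg_def using i ic M by (simp add: prob_space.prob_space)
  finally show ?thesis by simp
qed

lemma u_deriv:
  assumes t: "t < T"
  shows "(u has_real_derivative (- l * (\<integral>\<omega>. max (r (X \<omega>) + u (t + X \<omega>) - u t) 0 \<partial>M))) (at t)"
proof -
  define a where "a = t - 1"
  define b where "b = (t + T) / 2"
  have ab: "a < t" "t < b" "b < T" using t by (auto simp: a_def b_def)
  define IaT where "IaT = integral {a..T} hh"
  define Fn where "Fn x = exp (l * x) * (IaT - integral {a..x} hh)" for x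
  have ev: "eventually (\<lambda>x. u x = Fn x) (nhds t)"
  proof -
    have "eventually (\<lambda>x. x \<in> {a<..<T}) (nhds t)"
      using ab t by (intro eventually_nhds_in_open) auto
    then show ?thesis
    proof eventually_elim
      case (elim x)
      then have "integral {a..x} hh + integral {x..T} hh = integral {a..T} hh"
        by (intro Henstock_Kurzweil_Integration.integral_combine[OF _ _ hh_HK(1)]) auto
      then show ?case using elim by (simp add: u_rep3 Fn_def IaT_def)
    qed
  qed
  have D1: "((\<lambda>x. integral {a..x} hh) has_real_derivative hh t) (at t)"
    using integral_has_real_derivative[OF hh_cont, of t a b] ab by (simp add: at_within_Icc_at)
  have D2: "(Fn has_real_derivative (l * exp (l * t) * (IaT - integral {a..t} hh) - exp (l * t) * hh t)) (at t)"
    unfolding Fn_def by (auto intro!: derivative_eq_intros D1 simp: algebra_simps)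
  have "l * exp (l * t) * (IaT - integral {a..t} hh) - exp (l * t) * hh t = l * u t - l * gg t"
  proof -
    have "exp (l * t) * hh t = l * gg t"
      by (simp add: hh_def exp_minus field_simps)
    moreover have "u t = exp (l * t) * (IaT - integral {a..t} hh)"
      using eventually_nhds_x_imp_x[OF ev] by (simp add: Fn_def)
    then have "l * exp (l * t) * (IaT - integral {a..t} hh) = l * u t" by simp
    ultimately show ?thesis by linarith
  qed
  also have "\<dots> = - l * (\<integral>\<omega>. max (r (X \<omega>) + u (t + X \<omega>) - u t) 0 \<partial>M)"
    using gg_minus_u[of t] by (simp add: algebra_simps)
  finally have D3: "(Fn has_real_derivative (- l * (\<integral>\<omega>. max (r (X \<omega>) + u (t + X \<omega>) - u t) 0 \<partial>M))) (at t)"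
    using D2 by simp
  show ?thesis by (rule DERIV_cong_ev[THEN iffD2, OF refl ev refl D3])
qed

end

context tm begin

lemma EM_nonneg: "0 \<le> EM c"
  unfolding EM_def by (rule Bochner_Integration.integral_nonneg) auto

lemma EM_le_D: "0 \<le> c \<Longrightarrow> EM c \<le> D"
proof -
  assume c: "0 \<le> c"
  have "EM c \<le> (\<integral>\<omega>. D \<partial>M)"
    unfolding EM_def
  proof (rule integral_mono[OF EM_int[OF c]])
    show "integrable M (\<lambda>\<omega>. D)" using M by (simp add: prob_space_def finite_measure.integrable_const)
    fix \<omega> assume "\<omega> \<in> space M"
    then have x: "X \<omega> \<in> {0..C}" using Xrange by auto
    moreover have "0 \<le> c * X \<omega>" using c x by auto
    ultimately show "max (r (X \<omega>) - c * X \<omega>) 0 \<le> D" using rrange ED by force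
  qed
  also have "\<dots> = D" using M by (simp add: prob_space.prob_space)
  finally show ?thesis .
qed

lemma EM_mono: "0 \<le> c \<Longrightarrow> c \<le> c' \<Longrightarrow> EM c' \<le> EM c"
  unfolding EM_def
proof (rule integral_mono)
  assume c: "0 \<le> c" "c \<le> c'"
  show "integrable M (\<lambda>\<omega>. max (r (X \<omega>) - c' * X \<omega>) 0)" using c by (intro EM_int) auto
  show "integrable M (\<lambda>\<omega>. max (r (X \<omega>) - c * X \<omega>) 0)" using c by (intro EM_int) auto
  fix \<omega> assume "\<omega> \<in> space M"
  then have x: "X \<omega> \<in> {0..C}" using Xrange by auto
  then have "c * X \<omega> \<le> c' * X \<omega>" using c by (intro mult_right_mono) auto
  then show "max (r (X \<omega>) - c' * X \<omega>) 0 \<le> max (r (X \<omega>) - c * X \<omega>) 0" by auto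
qed

lemma EM_lip: "0 \<le> c \<Longrightarrow> 0 \<le> c' \<Longrightarrow> \<bar>EM c - EM c'\<bar> \<le> C * \<bar>c - c'\<bar>"
proof -
  assume c: "0 \<le> c" "0 \<le> c'"
  have "\<bar>EM c - EM c'\<bar> = \<bar>\<integral>\<omega>. max (r (X \<omega>) - c * X \<omega>) 0 - max (r (X \<omega>) - c' * X \<omega>) 0 \<partial>M\<bar>"
    unfolding EM_def using EM_int[OF c(1)] EM_int[OF c(2)] by simp
  also have "\<dots> \<le> (\<integral>\<omega>. \<bar>max (r (X \<omega>) - c * X \<omega>) 0 - max (r (X \<omega>) - c' * X \<omega>) 0\<bar> \<partial>M)"
    by (rule integral_abs_bound)
  also have "\<dots> \<le> (\<integral>\<omega>. C * \<bar>c - c'\<bar> \<partial>M)"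
  proof (rule integral_mono)
    show "integrable M (\<lambda>\<omega>. \<bar>max (r (X \<omega>) - c * X \<omega>) 0 - max (r (X \<omega>) - c' * X \<omega>) 0\<bar>)"
      using EM_int[OF c(1)] EM_int[OF c(2)] by simp
    show "integrable M (\<lambda>\<omega>. C * \<bar>c - c'\<bar>)" using M by (simp add: prob_space_def finite_measure.integrable_const)
    fix \<omega> assume "\<omega> \<in> space M"
    then have x: "X \<omega> \<in> {0..C}" using Xrange by auto
    have "\<bar>max (r (X \<omega>) - c * X \<omega>) 0 - max (r (X \<omega>) - c' * X \<omega>) 0\<bar> \<le> \<bar>c * X \<omega> - c' * X \<omega>\<bar>"
      by (auto simp: max_def abs_le_iff)
    also have "\<dots> = \<bar>c - c'\<bar> * X \<omega>" using x by (simp add: left_diff_distrib[symmetric] abs_mult)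
    also have "\<dots> \<le> \<bar>c - c'\<bar> * C" using x by (intro mult_left_mono) auto
    finally show "\<bar>max (r (X \<omega>) - c * X \<omega>) 0 - max (r (X \<omega>) - c' * X \<omega>) 0\<bar> \<le> C * \<bar>c - c'\<bar>"
      by (simp add: mult.commute)
  qed
  also have "\<dots> = C * \<bar>c - c'\<bar>" using M by (simp add: prob_space.prob_space)
  finally show ?thesis .
qed

lemma Phi_cont: "continuous_on {0..b} (\<lambda>c. l * EM c - c)"
proof -
  have "continuous_on {0..b} EM"
  proof (rule lipschitz_on_continuous_on)
    show "C-lipschitz_on {0..b} EM"
      using C EM_lip by (intro lipschitz_onI) (auto simp: dist_real_def)
  qed
  then show ?thesis by (intro continuous_intros)
qed

lemma Phi_root: "\<exists>!c. 0 \<le> c \<and> l * EM c - c = 0"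
proof (rule ex_ex1I)
  define c1 where "c1 = l * D + 1"
  have c1: "0 \<le> c1" using l ED by (simp add: c1_def)
  have "l * EM c1 \<le> l * D" using mult_left_mono[OF EM_le_D[OF c1]] l by simp
  then have "l * EM c1 - c1 \<le> 0" by (simp add: c1_def)
  moreover have "0 \<le> l * EM 0 - 0" using l EM_nonneg by simp
  ultimately have "\<exists>x. 0 \<le> x \<and> x \<le> c1 \<and> l * EM x - x = 0"
    using IVT2'[of "\<lambda>c. l * EM c - c" c1 0 0, OF _ _ c1 Phi_cont] by simp
  then show "\<exists>c. 0 \<le> c \<and> l * EM c - c = 0" by blast
next
  fix c c' assume a: "0 \<le> c \<and> l * EM c - c = 0" "0 \<le> c' \<and> l * EM c' - c' = 0"
  show "c = c'"
  proof (rule ccontr)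
    assume "c \<noteq> c'"
    then consider "c < c'" | "c' < c" by linarith
    then show False
    proof cases
      case 1
      then have "EM c' \<le> EM c" using a by (intro EM_mono) auto
      then have "l * EM c' \<le> l * EM c" using l by (intro mult_left_mono) auto
      then show False using a 1 by linarith
    next
      case 2
      then have "EM c \<le> EM c'" using a by (intro EM_mono) auto
      then have "l * EM c \<le> l * EM c'" using l by (intro mult_left_mono) auto
      then show False using a 2 by linarith
    qed
  qed
qed

end

theorem proposition2p1:
  fixes M :: "'a measure" and X :: "'a \<Rightarrow> real" and r :: "real \<Rightarrow> real"
    and l C D E T :: real
  assumes M: "prob_space M"
    and Xm: "X \<in> borel_measurable M"
    and Xrange: "\<forall>w\<in>space M. X w \<in> {0..C}"
    and C: "C > 0"
    and rm: "r \<in> borel_measurable borel"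
    and rrange: "\<forall>x\<in>{0..C}. r x \<in> {E..D}"
    and ED: "E \<le> 0" "0 \<le> D"
    and l: "l > 0"
  defines "v \<equiv> value_fn l M X r T"
    and "\<Phi> \<equiv> (\<lambda>c. l * integral\<^sup>L M (\<lambda>w. max (r (X w) - c * X w) 0) - c)"
  shows "(\<forall>t<T. (v has_real_derivative
             (- l * integral\<^sup>L M (\<lambda>w. max (r (X w) + v (t + X w) - v t) 0))) (at t))
       \<and> (\<forall>t\<ge>T. v t = 0)
       \<and> (\<exists>!c. c \<ge> 0 \<and> \<Phi> c = 0)
       \<and> (\<forall>c. c \<ge> 0 \<and> \<Phi> c = 0 \<longrightarrow>
            (\<forall>t\<in>{0..T}. c * (T - (t - C)) \<ge> v t \<and> v t \<ge> c * (T - t)))"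
proof -
  have tmI: "tm M X r l C D E"
    unfolding tm_def by (intro conjI M Xm Xrange C rm rrange ED l)
  interpret tm M X r l C D E T by (rule tmI)
  have v_eq: "v = u" unfolding v_def by (rule ext) (rule value_eq_u)
  have Phi_eq: "\<Phi> = (\<lambda>c. l * EM c - c)" unfolding \<Phi>_def EM_def by simp
  have p1: "\<forall>t<T. (v has_real_derivative
             (- l * integral\<^sup>L M (\<lambda>w. max (r (X w) + v (t + X w) - v t) 0))) (at t)"
    unfolding v_eq by (intro allI impI u_deriv)
  have p2: "\<forall>t\<ge>T. v t = 0" unfolding v_eq by (intro allI impI u_zero)
  have p3: "\<exists>!c. c \<ge> 0 \<and> \<Phi> c = 0" unfolding Phi_eq using Phi_root by simp
  have p4: "\<forall>c. c \<ge> 0 \<and> \<Phi> c = 0 \<longrightarrow> (\<forall>t\<in>{0..T}. c * (T - (t - C)) \<ge> v t \<and> v t \<ge> c * (T - t))"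
  proof (intro allI impI ballI)
    fix c t assume c: "c \<ge> 0 \<and> \<Phi> c = 0" and t: "t \<in> {0..T}"
    then have c0: "0 \<le> c" and ce: "l * EM c = c" by (auto simp: Phi_eq)
    have "u t \<le> Wt c t" by (rule u_le_Wt) (use c0 ce in auto)
    also have "\<dots> \<le> c * (T - (t - C))" using t c0 C by (auto simp: Wt_def algebra_simps)
    finally have up: "u t \<le> c * (T - (t - C))" .
    have "wl c t \<le> u t" by (rule u_ge_wl) (use c0 ce in auto)
    moreover have "wl c t = c * (T - t)" using t by (simp add: wl_def)
    ultimately show "c * (T - (t - C)) \<ge> v t \<and> v t \<ge> c * (T - t)" using up v_eq by simp
  qed
  show ?thesis using p1 p2 p3 p4 by (intro conjI)
qed

end
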